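(* For every $q\in\mathbb{K}$, the $q$-tridendriform algebra $\mathbf{ST}(q)=(\mathbf{ST},\succ_q,\cdot_q,\prec_q)$ equipped with the coproduct $\Delta$ is a $q$-tridendriform bialgebra.
   Context: Words: a map $h:[n]\to\mathbb{Z}_{>0}$ is identified with the word $(h(1),\dots,h(n))$; $\max(h)$ is its largest value; for $h$ of length $n$ and $k$ of length $m$, $hk$ is the concatenation (length $n+m$); $\cap(h,k):=|\mathrm{Im}(h)\cap\mathrm{Im}(k)|$. A word $u$ is surjective if $\mathrm{Im}(u)=[\max(u)]$. $\mathbf{ST}_n^r$ is the set of surjections $[n]\to[r]$, $\mathbf{ST}_n=\bigcup_{r=1}^n\mathbf{ST}_n^r$, $\mathbf{ST}=\bigoplus_{n\ge1}\mathbb{K}[\mathbf{ST}_n]$. The standardization $\mathrm{std}(h)$ of a word $h$ of length $n$ is the unique surjection $s$ with $h(i)<h(j)\iff s(i)<s(j)$ (so also $h(i)=h(j)\iff s(i)=s(j)$). For $f\in\mathbf{ST}_n$, $g\in\mathbf{ST}_m$: $f\succ_qg=\sum_{\max(h)<\max(k)}q^{\cap(h,k)}hk$, $f\cdot_qg=\sum_{\max(h)=\max(k)}q^{\cap(h,k)-1}hk$, $f\prec_qg=\sum_{\max(h)>\max(k)}q^{\cap(h,k)}hk$, sums over pairs of words $(h,k)$ with $hk$ surjective, $\mathrm{std}(h)=f$, $\mathrm{std}(k)=g$. These make $\mathbf{ST}$ a $q$-tridendriform algebra. Coproduct on $\mathbf{ST}_+=\mathbf{ST}\oplus\mathbb{K}1$: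 $\Delta(1)=1\otimes1$ and for $f\in\mathbf{ST}_n^r$, $\Delta(f)=\sum_{j=0}^rf|^{[j]}\otimes\mathrm{std}(f|^{\{j+1,\dots,r\}})$, where for $K\subseteq[r]$ the co-restriction $f|^K$ is the word $(f(j_1),\dots,f(j_l))$ with $\{j_1<\dots<j_l\}=f^{-1}(K)$, and the empty word is identified with $1$. $q$-tridendriform algebra: bilinear $\prec,\cdot,\succ$ satisfying (1) $(a\prec b)\prec c=a\prec(b\prec c+b\succ c+q\,b\cdot c)$; (2) $(a\succ b)\prec c=a\succ(b\prec c)$; (3) $(a\prec b+a\succ b+q\,a\cdot b)\succ c=a\succ(b\succ c)$; (4) $(a\cdot b)\cdot c=a\cdot(b\cdot c)$; (5) $(a\succ b)\cdot c=a\succ(b\cdot c)$; (6) $(a\prec b)\cdot c=a\cdot(b\succ c)$; (7) $(a\cdot b)\prec c=a\cdot(b\prec c)$; $*=\prec+q\,\cdot+\succ$. $q$-tridendriform bialgebra: with unit conventions $x\succ1=x\cdot1=1\cdot x=1\prec x=0$, $1\succ x=x=x\prec1$, $1*x=x*1=x$, $(x*y)\otimes(1\circ1):=(x\circ y)\otimes1$, a linear $\Delta:H_+\to H_+\otimes H_+$ with $\Delta(1)=1\otimes1$, counit conditions $(\epsilon\otimes\mathrm{Id})\Delta(x)=1\otimes x$, $(\mathrm{Id}\otimes\epsilon)\Delta(x)=x\otimes1$, and $\Delta(x\circ y)=\sum(x_{(1)}*y_{(1)})\otimes(x_{(2)}\circ y_{(2)})$ for $\circ\in\{\succ,\cdot,\prec\}$.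 *)

theory Defs
  imports Main
begin

text \<open>An element of ST_+ (resp. ST) is a finitely supported coefficient function on words whose
  support consists of surjective words (resp. nonempty surjective words); the empty word is
  the unit 1. Elements of ST_+ (x) ST_+ are finitely supported functions on pairs of words
  (the tensor product of free modules has the pairs of basis elements as a basis).\<close>

definition wmax :: "nat list \<Rightarrow> nat" where
  "wmax w = Max (insert 0 (set w))"

definition surjw :: "nat list \<Rightarrow> bool" where
  "surjw w \<longleftrightarrow> set w = {1..wmax w}"

definition capw :: "nat list \<Rightarrow> nat list \<Rightarrow> nat" where
  "capw h k = card (set h \<inter> set k)"

text \<open>standardization: the unique surjection with the same relative order\<close>
definition stdw :: "nat list \<Rightarrow> nat list" where
  "stdw w = map (\<lambda>x. card {y \<in> set w. y \<le> x}) w"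

definition supp :: "('a \<Rightarrow> 'k::zero) \<Rightarrow> 'a set" where
  "supp x = {w. x w \<noteq> 0}"

definition inSTp :: "(nat list \<Rightarrow> 'k::zero) \<Rightarrow> bool" where
  "inSTp x \<longleftrightarrow> finite (supp x) \<and> (\<forall>w\<in>supp x. surjw w)"

definition inST :: "(nat list \<Rightarrow> 'k::zero) \<Rightarrow> bool" where
  "inST x \<longleftrightarrow> finite (supp x) \<and> (\<forall>w\<in>supp x. surjw w \<and> w \<noteq> [])"

definition delta :: "'a \<Rightarrow> 'a \<Rightarrow> 'k::{zero,one}" where
  "delta u = (\<lambda>w. if w = u then 1 else 0)"

definition vadd :: "('a \<Rightarrow> 'k::plus) \<Rightarrow> ('a \<Rightarrow> 'k) \<Rightarrow> 'a \<Rightarrow> 'k" where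
  "vadd x y = (\<lambda>w. x w + y w)"

definition smul :: "'k::times \<Rightarrow> ('a \<Rightarrow> 'k) \<Rightarrow> 'a \<Rightarrow> 'k" where
  "smul c x = (\<lambda>w. c * x w)"

text \<open>Coefficient of the word w in the products of basis surjections f, g (f, g nonempty):
  the pair (h,k) with hk = w is determined by w (h = first |f| letters).\<close>
definition succ_b :: "'k::comm_ring_1 \<Rightarrow> nat list \<Rightarrow> nat list \<Rightarrow> nat list \<Rightarrow> 'k" where
  "succ_b q f g w = (let h = take (length f) w; k = drop (length f) w in
     if length w = length f + length g \<and> surjw w \<and> stdw h = f \<and> stdw k = g \<and> wmax h < wmax k
     then q ^ capw h k else 0)"

definition dot_b :: "'k::comm_ring_1 \<Rightarrow> nat list \<Rightarrow> nat list \<Rightarrow> nat list \<Rightarrow> 'k" where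
  "dot_b q f g w = (let h = take (length f) w; k = drop (length f) w in
     if length w = length f + length g \<and> surjw w \<and> stdw h = f \<and> stdw k = g \<and> wmax h = wmax k
     then q ^ (capw h k - 1) else 0)"

definition prec_b :: "'k::comm_ring_1 \<Rightarrow> nat list \<Rightarrow> nat list \<Rightarrow> nat list \<Rightarrow> 'k" where
  "prec_b q f g w = (let h = take (length f) w; k = drop (length f) w in
     if length w = length f + length g \<and> surjw w \<and> stdw h = f \<and> stdw k = g \<and> wmax h > wmax k
     then q ^ capw h k else 0)"

definition succ_w :: "'k::comm_ring_1 \<Rightarrow> nat list \<Rightarrow> nat list \<Rightarrow> nat list \<Rightarrow> 'k" where
  "succ_w q f g = (if g = [] then (\<lambda>_. 0) else if f = [] then delta g else succ_b q f g)"

definition dot_w :: "'k::comm_ring_1 \<Rightarrow> nat list \<Rightarrow> nat list \<Rightarrow> nat list \<Rightarrow> 'k" where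
  "dot_w q f g = (if f = [] \<or> g = [] then (\<lambda>_. 0) else dot_b q f g)"

definition prec_w :: "'k::comm_ring_1 \<Rightarrow> nat list \<Rightarrow> nat list \<Rightarrow> nat list \<Rightarrow> 'k" where
  "prec_w q f g = (if f = [] then (\<lambda>_. 0) else if g = [] then delta f else prec_b q f g)"

definition star_w :: "'k::comm_ring_1 \<Rightarrow> nat list \<Rightarrow> nat list \<Rightarrow> nat list \<Rightarrow> 'k" where
  "star_w q f g = (if f = [] then delta g else if g = [] then delta f
     else (\<lambda>w. prec_b q f g w + q * dot_b q f g w + succ_b q f g w))"

definition bil :: "(nat list \<Rightarrow> nat list \<Rightarrow> nat list \<Rightarrow> 'k::comm_ring_1)
    \<Rightarrow> (nat list \<Rightarrow> 'k) \<Rightarrow> (nat list \<Rightarrow> 'k) \<Rightarrow> nat list \<Rightarrow> 'k" where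
  "bil B x y = (\<lambda>w. \<Sum>f\<in>supp x. \<Sum>g\<in>supp y. x f * y g * B f g w)"

definition succ_q where "succ_q q = bil (succ_w q)"
definition dot_q where "dot_q q = bil (dot_w q)"
definition prec_q where "prec_q q = bil (prec_w q)"

definition tens :: "('a \<Rightarrow> 'k::times) \<Rightarrow> ('a \<Rightarrow> 'k) \<Rightarrow> 'a \<times> 'a \<Rightarrow> 'k" where
  "tens a b = (\<lambda>(u, v). a u * b v)"

definition corestr :: "nat list \<Rightarrow> nat set \<Rightarrow> nat list" where
  "corestr f K = filter (\<lambda>i. i \<in> K) f"

definition cop_w :: "nat list \<Rightarrow> nat list \<times> nat list \<Rightarrow> 'k::comm_ring_1" where
  "cop_w f = (\<lambda>(u, v). \<Sum>j\<in>{0..wmax f}.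
      if u = corestr f {1..j} \<and> v = stdw (corestr f {j+1..wmax f}) then 1 else 0)"

definition cop :: "(nat list \<Rightarrow> 'k::comm_ring_1) \<Rightarrow> nat list \<times> nat list \<Rightarrow> 'k" where
  "cop x = (\<lambda>p. \<Sum>f\<in>supp x. x f * cop_w f p)"

text \<open>counit epsilon(1) = 1, epsilon(ST) = 0, and the maps (eps (x) Id), (Id (x) eps)
  from ST_+ (x) ST_+ to K (x) ST_+ = ST_+ resp. ST_+ (x) K = ST_+\<close>
definition eps_id :: "(nat list \<times> nat list \<Rightarrow> 'k::comm_ring_1) \<Rightarrow> nat list \<Rightarrow> 'k" where
  "eps_id T = (\<lambda>v. \<Sum>u\<in>{u. T (u, v) \<noteq> 0}. delta [] u * T (u, v))"

definition id_eps :: "(nat list \<times> nat list \<Rightarrow> 'k::comm_ring_1) \<Rightarrow> nat list \<Rightarrow> 'k" where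
  "id_eps T = (\<lambda>u. \<Sum>v\<in>{v. T (u, v) \<noteq> 0}. delta [] v * T (u, v))"

text \<open>Right-hand side sum (x_(1) * y_(1)) (x) (x_(2) o y_(2)) of the compatibility
  relation, with the convention (x * y) (x) (1 o 1) := (x o y) (x) 1.\<close>
definition compat_rhs ::
  "'k::comm_ring_1 \<Rightarrow> ('k \<Rightarrow> nat list \<Rightarrow> nat list \<Rightarrow> nat list \<Rightarrow> 'k)
     \<Rightarrow> (nat list \<Rightarrow> 'k) \<Rightarrow> (nat list \<Rightarrow> 'k) \<Rightarrow> nat list \<times> nat list \<Rightarrow> 'k" where
  "compat_rhs q opw x y = (\<lambda>p.
     \<Sum>(a, b)\<in>supp (cop x). \<Sum>(c, d)\<in>supp (cop y). cop x (a, b) * cop y (c, d) *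
       (if b = [] \<and> d = [] then tens (opw q a c) (delta []) p
        else tens (star_w q a c) (opw q b d) p))"

end

theory Submission
  imports Defs
begin

definition smono :: "nat set \<Rightarrow> (nat \<Rightarrow> nat) \<Rightarrow> bool" where
  "smono S \<phi> \<longleftrightarrow> (\<forall>x\<in>S. \<forall>y\<in>S. x < y \<longrightarrow> \<phi> x < \<phi> y)"

definition rk :: "nat list \<Rightarrow> nat \<Rightarrow> nat" where
  "rk w x = card {y \<in> set w. y \<le> x}"

lemma stdw_rk: "stdw w = map (rk w) w"
  by (simp add: stdw_def rk_def)

lemma rk_le: "x \<le> x' \<Longrightarrow> rk w x \<le> rk w x'"
  unfolding rk_def by (rule card_mono) auto

lemma rk_less: "x < x' \<Longrightarrow> x' \<in> set w \<Longrightarrow> rk w x < rk w x'"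
  unfolding rk_def
proof (rule psubset_card_mono)
  assume "x < x'" "x' \<in> set w"
  then have "x' \<in> {y \<in> set w. y \<le> x'}" "x' \<notin> {y \<in> set w. y \<le> x}" by auto
  moreover have "{y \<in> set w. y \<le> x} \<subseteq> {y \<in> set w. y \<le> x'}" using \<open>x < x'\<close> by auto
  ultimately show "{y \<in> set w. y \<le> x} \<subset> {y \<in> set w. y \<le> x'}" by blast
qed simp

lemma smono_rk: "smono (set w) (rk w)"
  unfolding smono_def using rk_less by blast

lemma smono_subset: "smono S \<phi> \<Longrightarrow> T \<subseteq> S \<Longrightarrow> smono T \<phi>"
  unfolding smono_def by blast

lemma smonoD: "smono S \<phi> \<Longrightarrow> x \<in> S \<Longrightarrow> y \<in> S \<Longrightarrow> x < y \<Longrightarrow> \<phi> x < \<phi> y"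
  unfolding smono_def by blast

lemma smono_le_iff: "smono S \<phi> \<Longrightarrow> x \<in> S \<Longrightarrow> y \<in> S \<Longrightarrow> \<phi> x \<le> \<phi> y \<longleftrightarrow> x \<le> y"
  by (cases x y rule: linorder_cases) (auto dest: smonoD)

lemma smono_less_iff: "smono S \<phi> \<Longrightarrow> x \<in> S \<Longrightarrow> y \<in> S \<Longrightarrow> \<phi> x < \<phi> y \<longleftrightarrow> x < y"
  by (cases x y rule: linorder_cases) (auto dest: smonoD)

lemma smono_inj: "smono S \<phi> \<Longrightarrow> inj_on \<phi> S"
  unfolding smono_def inj_on_def by (metis nat_neq_iff)

lemma smono_eq_iff: "smono S \<phi> \<Longrightarrow> x \<in> S \<Longrightarrow> y \<in> S \<Longrightarrow> \<phi> x = \<phi> y \<longleftrightarrow> x = y"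
  using smono_inj inj_on_eq_iff by metis

lemma smono_comp: "smono S \<phi> \<Longrightarrow> smono (\<phi> ` S) \<psi> \<Longrightarrow> smono S (\<psi> \<circ> \<phi>)"
  unfolding smono_def by auto

lemma rk_map: assumes "smono (set w) \<phi>" "x \<in> set w"
  shows "rk (map \<phi> w) (\<phi> x) = rk w x"
proof -
  have "{y \<in> set (map \<phi> w). y \<le> \<phi> x} = \<phi> ` {y \<in> set w. y \<le> x}"
    using smono_le_iff[OF assms(1) _ assms(2)] by auto
  moreover have "inj_on \<phi> {y \<in> set w. y \<le> x}"
    using smono_inj[OF assms(1)] by (rule inj_on_subset) auto
  ultimately show ?thesis unfolding rk_def by (simp add: card_image)
qed

lemma stdw_map: "smono (set w) \<phi> \<Longrightarrow> stdw (map \<phi> w) = stdw w"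
  by (simp add: stdw_rk rk_map)

lemma wmax_Nil[simp]: "wmax [] = 0" by (simp add: wmax_def)

lemma wmax_ge: "x \<in> set w \<Longrightarrow> x \<le> wmax w"
  unfolding wmax_def by simp

lemma wmax_in: "w \<noteq> [] \<Longrightarrow> wmax w \<in> set w"
proof -
  assume "w \<noteq> []"
  then obtain a where a: "a \<in> set w" by (cases w) auto
  have "Max (insert 0 (set w)) \<in> insert 0 (set w)" by (rule Max_in) auto
  moreover have "Max (insert 0 (set w)) \<ge> a" using a by simp
  ultimately show ?thesis unfolding wmax_def using a by (cases "Max (insert 0 (set w)) = 0") auto
qed

lemma wmax_le: "(\<And>x. x \<in> set w \<Longrightarrow> x \<le> m) \<Longrightarrow> wmax w \<le> m"
  unfolding wmax_def by simp

lemma wmax_append: "wmax (a @ b) = max (wmax a) (wmax b)"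
proof -
  have "insert 0 (set (a @ b)) = insert 0 (set a) \<union> insert 0 (set b)" by auto
  then show ?thesis unfolding wmax_def using Max_Un[of "insert 0 (set a)" "insert 0 (set b)"] by simp
qed

lemma wmax_set: "set a = set b \<Longrightarrow> wmax a = wmax b"
  by (simp add: wmax_def)

lemma wmax_map: assumes "smono (set w) \<phi>" "w \<noteq> []" shows "wmax (map \<phi> w) = \<phi> (wmax w)"
proof (rule antisym)
  show "wmax (map \<phi> w) \<le> \<phi> (wmax w)"
    by (rule wmax_le) (use assms smono_le_iff wmax_ge wmax_in in auto)
  show "\<phi> (wmax w) \<le> wmax (map \<phi> w)"
    using wmax_in[OF assms(2)] by (intro wmax_ge) auto
qed

lemma surjw_iff: "surjw w \<longleftrightarrow> (\<exists>m. set w = {1..m})"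
proof
  assume "\<exists>m. set w = {1..m}"
  then obtain m where m: "set w = {1..m}" by blast
  have "wmax w = m"
  proof (cases "m = 0")
    case True then show ?thesis using m by (simp add: wmax_def)
  next
    case False
    then have "w \<noteq> []" using m by auto
    then have "wmax w \<in> {1..m}" using wmax_in m by auto
    moreover have "m \<le> wmax w" using m False by (intro wmax_ge) auto
    ultimately show ?thesis by auto
  qed
  then show "surjw w" using m by (simp add: surjw_def)
qed (auto simp: surjw_def)

lemma card_set_std: "set (stdw w) = {1..card (set w)}"
proof -
  have im: "set (stdw w) = rk w ` set w" by (simp add: stdw_rk)
  have inj: "inj_on (rk w) (set w)" by (rule smono_inj[OF smono_rk])
  have sub: "rk w ` set w \<subseteq> {1..card (set w)}"
  proof
    fix y assume "y \<in> rk w ` set w"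
    then obtain x where x: "x \<in> set w" "y = rk w x" by auto
    have "rk w x \<le> card (set w)" unfolding rk_def by (rule card_mono) auto
    moreover have "rk w x \<ge> 1" unfolding rk_def using x(1)
      by (metis (mono_tags, lifting) One_nat_def Suc_leI card_gt_0_iff empty_iff finite_set finite_subset mem_Collect_eq order_refl subsetI)
    ultimately show "y \<in> {1..card (set w)}" using x by auto
  qed
  have "card (rk w ` set w) = card {1..card (set w)}" using card_image[OF inj] by simp
  then have "rk w ` set w = {1..card (set w)}"
    using sub by (intro card_subset_eq) auto
  then show ?thesis using im by simp
qed

lemma surjw_std: "surjw (stdw w)"
  using card_set_std surjw_iff by blast

lemma length_std[simp]: "length (stdw w) = length w" by (simp add: stdw_def)

lemma std_Nil_iff[simp]: "stdw w = [] \<longleftrightarrow> w = []" by (simp add: stdw_def)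

lemma std_surj: "surjw w \<Longrightarrow> stdw w = w"
proof -
  assume "surjw w"
  then obtain m where m: "set w = {1..m}" using surjw_iff by blast
  have "rk w x = x" if "x \<in> set w" for x
  proof -
    have "{y \<in> set w. y \<le> x} = {1..x}" using m that by auto
    then show ?thesis by (simp add: rk_def)
  qed
  then show ?thesis by (simp add: stdw_rk map_idI)
qed

lemma std_std[simp]: "stdw (stdw w) = stdw w"
  by (rule std_surj[OF surjw_std])

lemma std_take_std: "stdw (take n (stdw w)) = stdw (take n w)"
  by (simp add: stdw_rk[of w] take_map stdw_map smono_subset[OF smono_rk] set_take_subset)

lemma std_drop_std: "stdw (drop n (stdw w)) = stdw (drop n w)"
  by (simp add: stdw_rk[of w] drop_map stdw_map smono_subset[OF smono_rk] set_drop_subset)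

lemma std_repr: "\<exists>\<alpha>. smono (set (stdw w)) \<alpha> \<and> w = map \<alpha> (stdw w)"
proof -
  let ?\<alpha> = "inv_into (set w) (rk w)"
  have inj: "inj_on (rk w) (set w)" by (rule smono_inj[OF smono_rk])
  have "w = map ?\<alpha> (stdw w)" by (simp add: stdw_rk inv_into_f_f[OF inj] map_idI)
  moreover have "smono (set (stdw w)) ?\<alpha>"
    unfolding smono_def stdw_rk
  proof (intro ballI impI)
    fix a b assume a: "a \<in> set (map (rk w) w)" and b: "b \<in> set (map (rk w) w)" and ab: "a < b"
    obtain x y where x: "x \<in> set w" "a = rk w x" and y: "y \<in> set w" "b = rk w y" using a b by auto
    have "x < y" using ab x y smono_less_iff[OF smono_rk] by metis
    then show "?\<alpha> a < ?\<alpha> b" using x y inv_into_f_f[OF inj] by simp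
  qed
  ultimately show ?thesis by blast
qed

lemma std_eq_map: assumes "stdw x = stdw y" shows "\<exists>\<phi>. smono (set x) \<phi> \<and> y = map \<phi> x"
proof -
  obtain \<beta> where b: "smono (set (stdw y)) \<beta>" "y = map \<beta> (stdw y)" using std_repr by blast
  have "y = map \<beta> (stdw x)" using b assms by simp
  then have "y = map (\<beta> \<circ> rk x) x" by (simp add: stdw_rk)
  moreover have "smono (set x) (\<beta> \<circ> rk x)"
  proof (rule smono_comp[OF smono_rk])
    have "rk x ` set x = set (stdw x)" by (simp add: stdw_rk)
    then have "rk x ` set x = set (stdw y)" using assms by simp
    then show "smono (rk x ` set x) \<beta>" using b(1) by simp
  qed
  ultimately show ?thesis by blast
qed

lemma capw_map: assumes "smono (set (h @ k)) \<phi>" shows "capw (map \<phi> h) (map \<phi> k) = capw h k"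
proof -
  have inj: "inj_on \<phi> (set h \<union> set k)" using smono_inj[OF assms] by simp
  have "\<phi> ` set h \<inter> \<phi> ` set k = \<phi> ` (set h \<inter> set k)"
    using inj by (auto simp: inj_on_def)
  moreover have "inj_on \<phi> (set h \<inter> set k)" using inj by (rule inj_on_subset) auto
  ultimately show ?thesis by (simp add: capw_def card_image)
qed


definition gb :: "(nat list \<Rightarrow> nat list \<Rightarrow> 'k::comm_ring_1) \<Rightarrow> nat list \<Rightarrow> nat list \<Rightarrow> nat list \<Rightarrow> 'k" where
  "gb c f g w = (if length w = length f + length g \<and> surjw w \<and> stdw (take (length f) w) = f
      \<and> stdw (drop (length f) w) = g then c (take (length f) w) (drop (length f) w) else 0)"

definition cS :: "'k::comm_ring_1 \<Rightarrow> nat list \<Rightarrow> nat list \<Rightarrow> 'k" where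
  "cS q h k = (if wmax h < wmax k then q ^ capw h k else 0)"
definition cD :: "'k::comm_ring_1 \<Rightarrow> nat list \<Rightarrow> nat list \<Rightarrow> 'k" where
  "cD q h k = (if wmax h = wmax k then q ^ (capw h k - 1) else 0)"
definition cP :: "'k::comm_ring_1 \<Rightarrow> nat list \<Rightarrow> nat list \<Rightarrow> 'k" where
  "cP q h k = (if wmax h > wmax k then q ^ capw h k else 0)"

lemma succ_b_gb: "succ_b q f g = gb (cS q) f g"
  by (auto simp: fun_eq_iff succ_b_def gb_def Let_def cS_def)
lemma dot_b_gb: "dot_b q f g = gb (cD q) f g"
  by (auto simp: fun_eq_iff dot_b_def gb_def Let_def cD_def)
lemma prec_b_gb: "prec_b q f g = gb (cP q) f g"
  by (auto simp: fun_eq_iff prec_b_def gb_def Let_def cP_def)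

lemma succ_w_gb: "f \<noteq> [] \<Longrightarrow> g \<noteq> [] \<Longrightarrow> succ_w q f g = gb (cS q) f g"
  by (simp add: succ_w_def succ_b_gb)
lemma dot_w_gb: "f \<noteq> [] \<Longrightarrow> g \<noteq> [] \<Longrightarrow> dot_w q f g = gb (cD q) f g"
  by (simp add: dot_w_def dot_b_gb)
lemma prec_w_gb: "f \<noteq> [] \<Longrightarrow> g \<noteq> [] \<Longrightarrow> prec_w q f g = gb (cP q) f g"
  by (simp add: prec_w_def prec_b_gb)

definition Wd :: "nat \<Rightarrow> nat list set" where
  "Wd L = {w. set w \<subseteq> {0..L} \<and> length w = L}"

lemma finite_Wd: "finite (Wd L)"
  unfolding Wd_def by (rule finite_lists_length_eq) simp

lemma surjw_bound: "surjw w \<Longrightarrow> set w \<subseteq> {0..length w}"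
proof -
  assume "surjw w"
  then obtain m where m: "set w = {1..m}" using surjw_iff by blast
  then have "m \<le> length w" using card_length[of w] by simp
  then show ?thesis using m by auto
qed

lemma gb_nz: "gb c f g w \<noteq> 0 \<Longrightarrow> w \<in> Wd (length f + length g) \<and> surjw w"
proof -
  assume "gb c f g w \<noteq> 0"
  then have "length w = length f + length g \<and> surjw w" by (auto simp: gb_def split: if_splits)
  then show ?thesis using surjw_bound[of w] by (auto simp: Wd_def)
qed

lemma prod_nz: "(a::'k::comm_ring_1) * b \<noteq> 0 \<Longrightarrow> a \<noteq> 0 \<and> b \<noteq> 0"
  by auto

definition cinv :: "(nat list \<Rightarrow> nat list \<Rightarrow> 'k) \<Rightarrow> bool" where
  "cinv c \<longleftrightarrow> (\<forall>h k \<phi>. h \<noteq> [] \<longrightarrow> k \<noteq> [] \<longrightarrow> smono (set (h @ k)) \<phi> \<longrightarrow> c (map \<phi> h) (map \<phi> k) = c h k)"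

lemma cinv_aux:
  assumes "h \<noteq> []" "k \<noteq> []" "smono (set (h @ k)) \<phi>"
  shows "wmax (map \<phi> h) = \<phi> (wmax h)" "wmax (map \<phi> k) = \<phi> (wmax k)"
    "\<phi> (wmax h) < \<phi> (wmax k) \<longleftrightarrow> wmax h < wmax k"
    "\<phi> (wmax h) = \<phi> (wmax k) \<longleftrightarrow> wmax h = wmax k"
    "capw (map \<phi> h) (map \<phi> k) = capw h k"
proof -
  have h: "smono (set h) \<phi>" "smono (set k) \<phi>" using assms(3) smono_subset by auto
  show "wmax (map \<phi> h) = \<phi> (wmax h)" "wmax (map \<phi> k) = \<phi> (wmax k)"
    using wmax_map h assms by auto
  have i: "wmax h \<in> set (h@k)" "wmax k \<in> set (h@k)" using wmax_in assms by auto
  show "\<phi> (wmax h) < \<phi> (wmax k) \<longleftrightarrow> wmax h < wmax k"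
    using smono_less_iff[OF assms(3) i] .
  show "\<phi> (wmax h) = \<phi> (wmax k) \<longleftrightarrow> wmax h = wmax k"
    using smono_eq_iff[OF assms(3) i] .
  show "capw (map \<phi> h) (map \<phi> k) = capw h k" using capw_map[OF assms(3)] .
qed

lemma cinv_cS: "cinv (cS q)"
  unfolding cinv_def cS_def
proof (intro allI impI)
  fix h k \<phi> assume a: "h \<noteq> []" "k \<noteq> []" "smono (set (h @ k)) \<phi>"
  show "(if wmax (map \<phi> h) < wmax (map \<phi> k) then q ^ capw (map \<phi> h) (map \<phi> k) else 0) =
        (if wmax h < wmax k then q ^ capw h k else 0)"
    using cinv_aux[OF a] by simp
qed

lemma cinv_cP: "cinv (cP q)"
  unfolding cinv_def cP_def
proof (intro allI impI)
  fix h k \<phi> assume a: "h \<noteq> []" "k \<noteq> []" "smono (set (h @ k)) \<phi>"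
  have "\<phi> (wmax k) < \<phi> (wmax h) \<longleftrightarrow> wmax k < wmax h"
    using cinv_aux[OF a(2,1)] a(3) by (metis set_append sup_commute)
  then show "(if wmax (map \<phi> h) > wmax (map \<phi> k) then q ^ capw (map \<phi> h) (map \<phi> k) else 0) =
        (if wmax h > wmax k then q ^ capw h k else 0)"
    using cinv_aux[OF a] by simp
qed

lemma cinv_cD: "cinv (cD q)"
  unfolding cinv_def cD_def
proof (intro allI impI)
  fix h k \<phi> assume a: "h \<noteq> []" "k \<noteq> []" "smono (set (h @ k)) \<phi>"
  show "(if wmax (map \<phi> h) = wmax (map \<phi> k) then q ^ (capw (map \<phi> h) (map \<phi> k) - 1) else 0) =
        (if wmax h = wmax k then q ^ (capw h k - 1) else 0)"
    using cinv_aux[OF a] by simp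
qed

definition T3L where
  "T3L c1 c2 f g h w = (if length w = length f + length g + length h \<and> surjw w
     \<and> stdw (take (length f) w) = f \<and> stdw (take (length g) (drop (length f) w)) = g
     \<and> stdw (drop (length f + length g) w) = h
     then c1 (take (length f) w) (take (length g) (drop (length f) w))
        * c2 (take (length f + length g) w) (drop (length f + length g) w) else 0)"

definition T3R where
  "T3R c1 c2 f g h w = (if length w = length f + length g + length h \<and> surjw w
     \<and> stdw (take (length f) w) = f \<and> stdw (take (length g) (drop (length f) w)) = g
     \<and> stdw (drop (length f + length g) w) = h
     then c1 (take (length g) (drop (length f) w)) (drop (length f + length g) w)
        * c2 (take (length f) w) (drop (length f) w) else 0)"

lemma sum_single_nz:
  assumes "finite U" "\<And>u. u \<in> U \<Longrightarrow> u \<noteq> u0 \<Longrightarrow> F u = 0" "F u0 \<noteq> 0 \<Longrightarrow> u0 \<in> U"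
  shows "(\<Sum>u\<in>U. F u) = F u0"
proof (cases "u0 \<in> U")
  case True
  then show ?thesis using assms by (simp add: sum.remove[of U u0] sum.neutral)
next
  case False
  then have "F u0 = 0" using assms(3) by blast
  moreover have "\<forall>u\<in>U. F u = 0" using assms(2) False by blast
  ultimately show ?thesis by simp
qed

lemma L3:
  assumes ne: "f \<noteq> []" "g \<noteq> []" "h \<noteq> []" and ci: "cinv c1"
    and U: "finite U" "\<And>u. gb c1 f g u \<noteq> 0 \<Longrightarrow> u \<in> U"
    and B: "\<And>u. u \<noteq> [] \<Longrightarrow> B u h w = gb c2 u h w"
  shows "(\<Sum>u\<in>U. gb c1 f g u * B u h w) = T3L c1 c2 f g h w"
proof -
  define y where "y = take (length f + length g) w"
  define u0 where "u0 = stdw y"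
  have s: "(\<Sum>u\<in>U. gb c1 f g u * B u h w) = gb c1 f g u0 * B u0 h w"
  proof (rule sum_single_nz[OF U(1)])
    fix u assume "u \<in> U" "u \<noteq> u0"
    show "gb c1 f g u * B u h w = 0"
    proof (rule ccontr)
      assume nz: "gb c1 f g u * B u h w \<noteq> 0"
      have l: "length u = length f + length g" using gb_nz[of c1 f g u] prod_nz[OF nz] by (auto simp: Wd_def)
      then have "u \<noteq> []" using ne by auto
      then have "gb c2 u h w \<noteq> 0" using prod_nz[OF nz] B by auto
      then have "stdw (take (length u) w) = u" by (auto simp: gb_def split: if_splits)
      then show False using \<open>u \<noteq> u0\<close> l by (simp add: u0_def y_def)
    qed
  next
    assume "gb c1 f g u0 * B u0 h w \<noteq> 0" then show "u0 \<in> U" using U(2) prod_nz by blast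
  qed
  show ?thesis
  proof (cases "length w = length f + length g + length h")
    case False
    have "gb c1 f g u0 * B u0 h w = 0"
    proof (rule ccontr)
      assume nz: "gb c1 f g u0 * B u0 h w \<noteq> 0"
      have l: "length u0 = length f + length g" using gb_nz[of c1 f g u0] prod_nz[OF nz] by (auto simp: Wd_def)
      then have "u0 \<noteq> []" using ne by auto
      then have "gb c2 u0 h w \<noteq> 0" using prod_nz[OF nz] B by auto
      then show False using False l by (auto simp: gb_def split: if_splits)
    qed
    then show ?thesis using s False by (simp add: T3L_def)
  next
    case True
    have ly: "length y = length f + length g" using True by (simp add: y_def)
    have lu: "length u0 = length f + length g" using ly by (simp add: u0_def)
    have u0ne: "u0 \<noteq> []" using lu ne by auto
    have e1: "take (length u0) w = y" "drop (length u0) w = drop (length f + length g) w"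
      using lu by (simp_all add: y_def)
    have e2: "stdw (take (length f) u0) = stdw (take (length f) w)"
      by (simp add: u0_def std_take_std y_def min_def)
    have e3: "stdw (drop (length f) u0) = stdw (take (length g) (drop (length f) w))"
      by (simp add: u0_def std_drop_std y_def drop_take)
    have yy: "y = take (length f) y @ drop (length f) y" by simp
    have e4: "c1 (take (length f) u0) (drop (length f) u0) = c1 (take (length f) w) (take (length g) (drop (length f) w))"
    proof -
      have "c1 (map (rk y) (take (length f) y)) (map (rk y) (drop (length f) y)) = c1 (take (length f) y) (drop (length f) y)"
        using ci unfolding cinv_def
      proof -
        have "take (length f) y \<noteq> []" "drop (length f) y \<noteq> []" using ly ne by auto
        then show ?thesis using ci smono_rk[of y] yy unfolding cinv_def by metis
      qed
      then show ?thesis by (simp add: u0_def stdw_rk take_map drop_map y_def min_def drop_take)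
    qed
    have "gb c1 f g u0 * B u0 h w = T3L c1 c2 f g h w"
      using B[OF u0ne] True lu e1 e2 e3 e4 surjw_std[of y]
      by (simp add: gb_def T3L_def u0_def[symmetric] y_def[symmetric] ac_simps)
    then show ?thesis using s by simp
  qed
qed

lemma R3:
  assumes ne: "f \<noteq> []" "g \<noteq> []" "h \<noteq> []" and ci: "cinv c1"
    and U: "finite U" "\<And>u. gb c1 g h u \<noteq> 0 \<Longrightarrow> u \<in> U"
    and B: "\<And>u. u \<noteq> [] \<Longrightarrow> B f u w = gb c2 f u w"
  shows "(\<Sum>u\<in>U. gb c1 g h u * B f u w) = T3R c1 c2 f g h w"
proof -
  define y where "y = drop (length f) w"
  define u0 where "u0 = stdw y"
  have s: "(\<Sum>u\<in>U. gb c1 g h u * B f u w) = gb c1 g h u0 * B f u0 w"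
  proof (rule sum_single_nz[OF U(1)])
    fix u assume "u \<in> U" "u \<noteq> u0"
    show "gb c1 g h u * B f u w = 0"
    proof (rule ccontr)
      assume nz: "gb c1 g h u * B f u w \<noteq> 0"
      have l: "length u = length g + length h" using gb_nz[of c1 g h u] prod_nz[OF nz] by (auto simp: Wd_def)
      then have "u \<noteq> []" using ne by auto
      then have "gb c2 f u w \<noteq> 0" using prod_nz[OF nz] B by auto
      then have "stdw (drop (length f) w) = u" by (auto simp: gb_def split: if_splits)
      then show False using \<open>u \<noteq> u0\<close> by (simp add: u0_def y_def)
    qed
  next
    assume "gb c1 g h u0 * B f u0 w \<noteq> 0" then show "u0 \<in> U" using U(2) prod_nz by blast
  qed
  show ?thesis
  proof (cases "length w = length f + length g + length h")
    case False
    have "gb c1 g h u0 * B f u0 w = 0"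
    proof (rule ccontr)
      assume nz: "gb c1 g h u0 * B f u0 w \<noteq> 0"
      have l: "length u0 = length g + length h" using gb_nz[of c1 g h u0] prod_nz[OF nz] by (auto simp: Wd_def)
      then have "u0 \<noteq> []" using ne by auto
      then have "gb c2 f u0 w \<noteq> 0" using prod_nz[OF nz] B by auto
      then show False using False l by (auto simp: gb_def split: if_splits)
    qed
    then show ?thesis using s False by (simp add: T3R_def)
  next
    case True
    have ly: "length y = length g + length h" using True by (simp add: y_def)
    have lu: "length u0 = length g + length h" using ly by (simp add: u0_def)
    have u0ne: "u0 \<noteq> []" using lu ne by auto
    have e2: "stdw (take (length g) u0) = stdw (take (length g) (drop (length f) w))"
      by (simp add: u0_def std_take_std y_def)
    have e3: "stdw (drop (length g) u0) = stdw (drop (length f + length g) w)"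
      by (simp add: u0_def std_drop_std y_def add.commute)
    have yy: "y = take (length g) y @ drop (length g) y" by simp
    have e4: "c1 (take (length g) u0) (drop (length g) u0) = c1 (take (length g) (drop (length f) w)) (drop (length f + length g) w)"
    proof -
      have "c1 (map (rk y) (take (length g) y)) (map (rk y) (drop (length g) y)) = c1 (take (length g) y) (drop (length g) y)"
      proof -
        have "take (length g) y \<noteq> []" "drop (length g) y \<noteq> []" using ly ne by auto
        then show ?thesis using ci smono_rk[of y] yy unfolding cinv_def by metis
      qed
      then show ?thesis by (simp add: u0_def stdw_rk take_map drop_map y_def add.commute)
    qed
    have "gb c1 g h u0 * B f u0 w = T3R c1 c2 f g h w"
      using B[OF u0ne] True lu e2 e3 e4 surjw_std[of y]
      by (simp add: gb_def T3R_def u0_def[symmetric] y_def[symmetric] ac_simps)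
    then show ?thesis using s by simp
  qed
qed


lemma card_id3: "finite A \<Longrightarrow> finite B \<Longrightarrow> finite C \<Longrightarrow>
  card (A \<inter> B) + card ((A \<union> B) \<inter> C) = card (B \<inter> C) + card (A \<inter> (B \<union> C))"
proof -
  assume f: "finite A" "finite B" "finite C"
  have 1: "card ((A \<inter> C) \<union> (B \<inter> C)) + card ((A \<inter> C) \<inter> (B \<inter> C)) = card (A \<inter> C) + card (B \<inter> C)"
    using card_Un_Int[of "A \<inter> C" "B \<inter> C"] f by auto
  have 2: "card ((A \<inter> B) \<union> (A \<inter> C)) + card ((A \<inter> B) \<inter> (A \<inter> C)) = card (A \<inter> B) + card (A \<inter> C)"
    using card_Un_Int[of "A \<inter> B" "A \<inter> C"] f by auto
  have e1: "(A \<inter> C) \<union> (B \<inter> C) = (A \<union> B) \<inter> C" "(A \<inter> C) \<inter> (B \<inter> C) = A \<inter> B \<inter> C" by auto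
  have e2: "(A \<inter> B) \<union> (A \<inter> C) = A \<inter> (B \<union> C)" "(A \<inter> B) \<inter> (A \<inter> C) = A \<inter> B \<inter> C" by auto
  show ?thesis using 1 2 unfolding e1 e2 by linarith
qed

lemma capw_pos: "h \<noteq> [] \<Longrightarrow> k \<noteq> [] \<Longrightarrow> wmax h = wmax k \<Longrightarrow> capw h k \<ge> 1"
proof -
  assume a: "h \<noteq> []" "k \<noteq> []" "wmax h = wmax k"
  then have "wmax h \<in> set h \<inter> set k" using wmax_in[OF a(1)] wmax_in[OF a(2)] by auto
  then show ?thesis unfolding capw_def
    by (metis One_nat_def Suc_leI card_gt_0_iff empty_iff finite_Int finite_set)
qed

lemma capw_app_l: "capw (a @ b) c = card ((set a \<union> set b) \<inter> set c)" by (simp add: capw_def)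
lemma capw_app_r: "capw a (b @ c) = card (set a \<inter> (set b \<union> set c))" by (simp add: capw_def)

lemma qpow_dec: "n \<ge> 1 \<Longrightarrow> (q::'k::comm_ring_1) * q ^ (n - 1) = q ^ n"
  by (metis One_nat_def Suc_le_D diff_Suc_1 power_Suc)
lemma qpow_dec': "n \<ge> Suc 0 \<Longrightarrow> (q::'k::comm_ring_1) * q ^ (n - Suc 0) = q ^ n"
  using qpow_dec by simp

context
  fixes x1 x2 x3 :: "nat list" and q :: "'k::comm_ring_1"
  assumes ne: "x1 \<noteq> []" "x2 \<noteq> []" "x3 \<noteq> []"
begin

lemma cid: "capw x1 x2 + capw (x1 @ x2) x3 = capw x2 x3 + capw x1 (x2 @ x3)"
  unfolding capw_app_l capw_app_r by (simp add: capw_def card_id3)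

lemma pos:
  "wmax x1 = wmax x2 \<Longrightarrow> capw x1 x2 \<ge> 1"
  "wmax x2 = wmax x3 \<Longrightarrow> capw x2 x3 \<ge> 1"
  "max (wmax x1) (wmax x2) = wmax x3 \<Longrightarrow> capw (x1 @ x2) x3 \<ge> 1"
  "wmax x1 = max (wmax x2) (wmax x3) \<Longrightarrow> capw x1 (x2 @ x3) \<ge> 1"
  using capw_pos[of x1 x2] capw_pos[of x2 x3] capw_pos[of "x1 @ x2" x3] capw_pos[of x1 "x2 @ x3"] ne
  by (auto simp: wmax_append)

lemmas bsimps = cP_def cS_def cD_def wmax_append power_add[symmetric] mult.assoc[symmetric] qpow_dec qpow_dec'

lemma blk1: "cP q x1 x2 * cP q (x1 @ x2) x3 =
  cP q x2 x3 * cP q x1 (x2 @ x3) + cS q x2 x3 * cP q x1 (x2 @ x3) + q * (cD q x2 x3 * cP q x1 (x2 @ x3))"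
proof -
  have p: "wmax x2 = wmax x3 \<Longrightarrow> capw x2 x3 \<ge> 1" using capw_pos ne by blast
  show ?thesis
    unfolding cP_def cS_def cD_def wmax_append using cid p
    by (cases "wmax x2" "wmax x3" rule: linorder_cases)
       (auto simp: power_add[symmetric] mult.assoc[symmetric] qpow_dec qpow_dec')
qed

lemma blk2: "cS q x1 x2 * cP q (x1 @ x2) x3 = cP q x2 x3 * cS q x1 (x2 @ x3)"
  using cid pos
  by (cases "wmax x2" "wmax x3" rule: linorder_cases; cases "wmax x1" "wmax x2" rule: linorder_cases)
     (auto simp: bsimps intro!: arg_cong[where f="power q"])

lemma blk3: "cP q x1 x2 * cS q (x1 @ x2) x3 + cS q x1 x2 * cS q (x1 @ x2) x3 + q * (cD q x1 x2 * cS q (x1 @ x2) x3)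
   = cS q x2 x3 * cS q x1 (x2 @ x3)"
  using cid pos
  by (cases "wmax x2" "wmax x3" rule: linorder_cases; cases "wmax x1" "wmax x2" rule: linorder_cases)
     (auto simp: bsimps intro!: arg_cong[where f="power q"])

lemma blk4: "cD q x1 x2 * cD q (x1 @ x2) x3 = cD q x2 x3 * cD q x1 (x2 @ x3)"
  using cid pos
  by (cases "wmax x2" "wmax x3" rule: linorder_cases; cases "wmax x1" "wmax x2" rule: linorder_cases)
     (auto simp: bsimps intro!: arg_cong[where f="power q"])

lemma blk5: "cS q x1 x2 * cD q (x1 @ x2) x3 = cD q x2 x3 * cS q x1 (x2 @ x3)"
  using cid pos
  by (cases "wmax x2" "wmax x3" rule: linorder_cases; cases "wmax x1" "wmax x2" rule: linorder_cases)
     (auto simp: bsimps intro!: arg_cong[where f="power q"])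

lemma blk6: "cP q x1 x2 * cD q (x1 @ x2) x3 = cS q x2 x3 * cD q x1 (x2 @ x3)"
  using cid pos
  by (cases "wmax x2" "wmax x3" rule: linorder_cases; cases "wmax x1" "wmax x2" rule: linorder_cases)
     (auto simp: bsimps intro!: arg_cong[where f="power q"])

lemma blk7: "cD q x1 x2 * cP q (x1 @ x2) x3 = cP q x2 x3 * cD q x1 (x2 @ x3)"
  using cid pos
  by (cases "wmax x2" "wmax x3" rule: linorder_cases; cases "wmax x1" "wmax x2" rule: linorder_cases)
     (auto simp: bsimps intro!: arg_cong[where f="power q"])

end

lemma bil_expand:
  assumes "finite F" "supp x \<subseteq> F" "finite G" "supp y \<subseteq> G"
  shows "bil B x y w = (\<Sum>f\<in>F. \<Sum>g\<in>G. x f * y g * B f g w)"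
proof -
  have "bil B x y w = (\<Sum>f\<in>supp x. \<Sum>g\<in>G. x f * y g * B f g w)"
    unfolding bil_def
    by (rule sum.cong[OF refl], rule sum.mono_neutral_left) (use assms in \<open>auto simp: supp_def\<close>)
  also have "\<dots> = (\<Sum>f\<in>F. \<Sum>g\<in>G. x f * y g * B f g w)"
    by (rule sum.mono_neutral_left) (use assms in \<open>auto simp: supp_def\<close>)
  finally show ?thesis .
qed

lemma supp_vadd: "supp (vadd x (y::'a \<Rightarrow> 'k::monoid_add)) \<subseteq> supp x \<union> supp y"
  by (auto simp: supp_def vadd_def)
lemma supp_smul: "supp (smul c (x::'a \<Rightarrow> 'k::mult_zero)) \<subseteq> supp x"
  by (auto simp: supp_def smul_def)

lemma bil_vadd_r: "finite (supp x) \<Longrightarrow> finite (supp y) \<Longrightarrow> finite (supp z) \<Longrightarrow>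
  bil B x (vadd y z) w = bil B x y w + bil B x z w"
proof -
  assume f: "finite (supp x)" "finite (supp y)" "finite (supp z)"
  have "bil B x (vadd y z) w = (\<Sum>f\<in>supp x. \<Sum>g\<in>supp y \<union> supp z. x f * vadd y z g * B f g w)"
    by (rule bil_expand) (use f supp_vadd[of y z] in auto)
  moreover have "bil B x y w = (\<Sum>f\<in>supp x. \<Sum>g\<in>supp y \<union> supp z. x f * y g * B f g w)"
    by (rule bil_expand) (use f in auto)
  moreover have "bil B x z w = (\<Sum>f\<in>supp x. \<Sum>g\<in>supp y \<union> supp z. x f * z g * B f g w)"
    by (rule bil_expand) (use f in auto)
  ultimately show ?thesis by (simp add: vadd_def sum.distrib[symmetric] algebra_simps)
qed

lemma bil_vadd_l: "finite (supp x) \<Longrightarrow> finite (supp y) \<Longrightarrow> finite (supp z) \<Longrightarrow>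
  bil B (vadd y z) x w = bil B y x w + bil B z x w"
proof -
  assume f: "finite (supp x)" "finite (supp y)" "finite (supp z)"
  have "bil B (vadd y z) x w = (\<Sum>g\<in>supp y \<union> supp z. \<Sum>f\<in>supp x. vadd y z g * x f * B g f w)"
    by (rule bil_expand) (use f supp_vadd[of y z] in auto)
  moreover have "bil B y x w = (\<Sum>g\<in>supp y \<union> supp z. \<Sum>f\<in>supp x. y g * x f * B g f w)"
    by (rule bil_expand) (use f in auto)
  moreover have "bil B z x w = (\<Sum>g\<in>supp y \<union> supp z. \<Sum>f\<in>supp x. z g * x f * B g f w)"
    by (rule bil_expand) (use f in auto)
  ultimately show ?thesis by (simp add: vadd_def sum.distrib[symmetric] algebra_simps)
qed

lemma bil_smul_r: "finite (supp x) \<Longrightarrow> finite (supp y) \<Longrightarrow> bil B x (smul c y) w = c * bil B x y w"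
proof -
  assume f: "finite (supp x)" "finite (supp y)"
  have "bil B x (smul c y) w = (\<Sum>f\<in>supp x. \<Sum>g\<in>supp y. x f * smul c y g * B f g w)"
    by (rule bil_expand) (use f supp_smul[of c y] in auto)
  then show ?thesis by (simp add: smul_def bil_def sum_distrib_left algebra_simps)
qed

lemma bil_smul_l: "finite (supp x) \<Longrightarrow> finite (supp y) \<Longrightarrow> bil B (smul c y) x w = c * bil B y x w"
proof -
  assume f: "finite (supp x)" "finite (supp y)"
  have "bil B (smul c y) x w = (\<Sum>g\<in>supp y. \<Sum>f\<in>supp x. smul c y g * x f * B g f w)"
    by (rule bil_expand) (use f supp_smul[of c y] in auto)
  then show ?thesis by (simp add: smul_def bil_def sum_distrib_left algebra_simps)
qed

definition UU :: "(nat list \<Rightarrow> 'k::zero) \<Rightarrow> (nat list \<Rightarrow> 'k) \<Rightarrow> nat list set" where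
  "UU a b = (\<Union>f\<in>supp a. \<Union>g\<in>supp b. Wd (length f + length g))"

lemma finite_UU: "finite (supp a) \<Longrightarrow> finite (supp b) \<Longrightarrow> finite (UU a b)"
  unfolding UU_def by (auto intro: finite_Wd)

definition isgb :: "(nat list \<Rightarrow> nat list \<Rightarrow> nat list \<Rightarrow> 'k::comm_ring_1) \<Rightarrow> (nat list \<Rightarrow> nat list \<Rightarrow> 'k) \<Rightarrow> bool" where
  "isgb B c \<longleftrightarrow> (\<forall>f g. f \<noteq> [] \<longrightarrow> g \<noteq> [] \<longrightarrow> B f g = gb c f g)"

lemma isgb_all: "isgb (succ_w q) (cS q)" "isgb (dot_w q) (cD q)" "isgb (prec_w q) (cP q)"
  by (auto simp: isgb_def succ_w_gb dot_w_gb prec_w_gb)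

lemma inST_bil:
  assumes a: "inST a" and b: "inST b" and B: "isgb B c"
  shows "inST (bil B a b)" "supp (bil B a b) \<subseteq> UU a b"
proof -
  have sub: "supp (bil B a b) \<subseteq> {w \<in> UU a b. surjw w \<and> w \<noteq> []}"
  proof
    fix w assume "w \<in> supp (bil B a b)"
    then have "(\<Sum>f\<in>supp a. \<Sum>g\<in>supp b. a f * b g * B f g w) \<noteq> 0" by (simp add: supp_def bil_def)
    then obtain f g where fg: "f \<in> supp a" "g \<in> supp b" "a f * b g * B f g w \<noteq> 0"
      by (meson sum.neutral)
    have ne: "f \<noteq> []" "g \<noteq> []" using fg a b by (auto simp: inST_def)
    have "gb c f g w \<noteq> 0" using fg(3) B ne by (auto simp: isgb_def)
    then have "w \<in> Wd (length f + length g) \<and> surjw w" by (rule gb_nz)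
    moreover then have "w \<noteq> []" using ne by (auto simp: Wd_def)
    ultimately show "w \<in> {w \<in> UU a b. surjw w \<and> w \<noteq> []}" using fg by (auto simp: UU_def)
  qed
  then show "supp (bil B a b) \<subseteq> UU a b" by auto
  have "finite (UU a b)" using a b by (intro finite_UU) (auto simp: inST_def)
  then show "inST (bil B a b)" using sub unfolding inST_def by (auto intro: finite_subset)
qed

lemma swap4: "(\<Sum>u\<in>U. \<Sum>h\<in>C. \<Sum>f\<in>A. \<Sum>g\<in>B. (T u h f g::'a::comm_monoid_add)) = (\<Sum>f\<in>A. \<Sum>g\<in>B. \<Sum>h\<in>C. \<Sum>u\<in>U. T u h f g)"
proof -
  have "(\<Sum>u\<in>U. \<Sum>h\<in>C. \<Sum>f\<in>A. \<Sum>g\<in>B. T u h f g) = (\<Sum>h\<in>C. \<Sum>u\<in>U. \<Sum>f\<in>A. \<Sum>g\<in>B. T u h f g)" by (rule sum.swap)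
  also have "\<dots> = (\<Sum>h\<in>C. \<Sum>f\<in>A. \<Sum>u\<in>U. \<Sum>g\<in>B. T u h f g)" by (rule sum.cong[OF refl], rule sum.swap)
  also have "\<dots> = (\<Sum>h\<in>C. \<Sum>f\<in>A. \<Sum>g\<in>B. \<Sum>u\<in>U. T u h f g)" by (rule sum.cong[OF refl], rule sum.cong[OF refl], rule sum.swap)
  also have "\<dots> = (\<Sum>f\<in>A. \<Sum>h\<in>C. \<Sum>g\<in>B. \<Sum>u\<in>U. T u h f g)" by (rule sum.swap)
  also have "\<dots> = (\<Sum>f\<in>A. \<Sum>g\<in>B. \<Sum>h\<in>C. \<Sum>u\<in>U. T u h f g)" by (rule sum.cong[OF refl], rule sum.swap)
  finally show ?thesis .
qed

lemma swap4r: "(\<Sum>f\<in>A. \<Sum>u\<in>U. \<Sum>g\<in>B. \<Sum>h\<in>C. (T f u g h::'a::comm_monoid_add)) = (\<Sum>f\<in>A. \<Sum>g\<in>B. \<Sum>h\<in>C. \<Sum>u\<in>U. T f u g h)"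
proof (rule sum.cong[OF refl])
  fix f
  have "(\<Sum>u\<in>U. \<Sum>g\<in>B. \<Sum>h\<in>C. T f u g h) = (\<Sum>g\<in>B. \<Sum>u\<in>U. \<Sum>h\<in>C. T f u g h)" by (rule sum.swap)
  also have "\<dots> = (\<Sum>g\<in>B. \<Sum>h\<in>C. \<Sum>u\<in>U. T f u g h)" by (rule sum.cong[OF refl], rule sum.swap)
  finally show "(\<Sum>u\<in>U. \<Sum>g\<in>B. \<Sum>h\<in>C. T f u g h) = (\<Sum>g\<in>B. \<Sum>h\<in>C. \<Sum>u\<in>U. T f u g h)" .
qed

lemma LV:
  assumes a: "inST a" and b: "inST b" and c: "inST c"
    and B1: "isgb B1 c1" and B2: "isgb B2 c2" and ci: "cinv c1"
  shows "bil B2 (bil B1 a b) c w = (\<Sum>f\<in>supp a. \<Sum>g\<in>supp b. \<Sum>h\<in>supp c. a f * b g * c h * T3L c1 c2 f g h w)"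
proof -
  have fa: "finite (supp a)" "finite (supp b)" "finite (supp c)" using a b c by (auto simp: inST_def)
  have fU: "finite (UU a b)" using fa by (intro finite_UU)
  have "bil B2 (bil B1 a b) c w = (\<Sum>u\<in>UU a b. \<Sum>h\<in>supp c. bil B1 a b u * c h * B2 u h w)"
    by (rule bil_expand) (use fU fa inST_bil(2)[OF a b B1] in auto)
  also have "\<dots> = (\<Sum>u\<in>UU a b. \<Sum>h\<in>supp c. \<Sum>f\<in>supp a. \<Sum>g\<in>supp b. a f * b g * c h * (B1 f g u * B2 u h w))"
    unfolding bil_def sum_distrib_right by (simp add: mult_ac)
  also have "\<dots> = (\<Sum>f\<in>supp a. \<Sum>g\<in>supp b. \<Sum>h\<in>supp c. \<Sum>u\<in>UU a b. a f * b g * c h * (B1 f g u * B2 u h w))"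
    by (rule swap4)
  also have "\<dots> = (\<Sum>f\<in>supp a. \<Sum>g\<in>supp b. \<Sum>h\<in>supp c. a f * b g * c h * T3L c1 c2 f g h w)"
  proof (intro sum.cong refl)
    fix f g h assume fgh: "f \<in> supp a" "g \<in> supp b" "h \<in> supp c"
    have ne: "f \<noteq> []" "g \<noteq> []" "h \<noteq> []" using fgh a b c by (auto simp: inST_def)
    have "(\<Sum>u\<in>UU a b. B1 f g u * B2 u h w) = (\<Sum>u\<in>UU a b. gb c1 f g u * B2 u h w)"
      using B1 ne by (simp add: isgb_def)
    also have "\<dots> = T3L c1 c2 f g h w"
    proof (rule L3[OF ne ci fU])
      fix u assume "gb c1 f g u \<noteq> 0" then show "u \<in> UU a b" using gb_nz[of c1 f g u] fgh by (auto simp: UU_def)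
    next
      fix u :: "nat list" assume "u \<noteq> []" then show "B2 u h w = gb c2 u h w" using B2 ne by (simp add: isgb_def)
    qed
    finally show "(\<Sum>u\<in>UU a b. a f * b g * c h * (B1 f g u * B2 u h w)) = a f * b g * c h * T3L c1 c2 f g h w"
      by (simp add: sum_distrib_left[symmetric])
  qed
  finally show ?thesis .
qed

lemma RV:
  assumes a: "inST a" and b: "inST b" and c: "inST c"
    and B1: "isgb B1 c1" and B2: "isgb B2 c2" and ci: "cinv c1"
  shows "bil B2 a (bil B1 b c) w = (\<Sum>f\<in>supp a. \<Sum>g\<in>supp b. \<Sum>h\<in>supp c. a f * b g * c h * T3R c1 c2 f g h w)"
proof -
  have fa: "finite (supp a)" "finite (supp b)" "finite (supp c)" using a b c by (auto simp: inST_def)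
  have fU: "finite (UU b c)" using fa by (intro finite_UU)
  have "bil B2 a (bil B1 b c) w = (\<Sum>f\<in>supp a. \<Sum>u\<in>UU b c. a f * bil B1 b c u * B2 f u w)"
    by (rule bil_expand) (use fU fa inST_bil(2)[OF b c B1] in auto)
  also have "\<dots> = (\<Sum>f\<in>supp a. \<Sum>u\<in>UU b c. \<Sum>g\<in>supp b. \<Sum>h\<in>supp c. a f * b g * c h * (B1 g h u * B2 f u w))"
    by (simp add: bil_def sum_distrib_right sum_distrib_left algebra_simps)
  also have "\<dots> = (\<Sum>f\<in>supp a. \<Sum>g\<in>supp b. \<Sum>h\<in>supp c. \<Sum>u\<in>UU b c. a f * b g * c h * (B1 g h u * B2 f u w))"
    by (rule swap4r)
  also have "\<dots> = (\<Sum>f\<in>supp a. \<Sum>g\<in>supp b. \<Sum>h\<in>supp c. a f * b g * c h * T3R c1 c2 f g h w)"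
  proof (intro sum.cong refl)
    fix f g h assume fgh: "f \<in> supp a" "g \<in> supp b" "h \<in> supp c"
    have ne: "f \<noteq> []" "g \<noteq> []" "h \<noteq> []" using fgh a b c by (auto simp: inST_def)
    have "(\<Sum>u\<in>UU b c. B1 g h u * B2 f u w) = (\<Sum>u\<in>UU b c. gb c1 g h u * B2 f u w)"
      using B1 ne by (simp add: isgb_def)
    also have "\<dots> = T3R c1 c2 f g h w"
    proof (rule R3[OF ne ci fU])
      fix u assume "gb c1 g h u \<noteq> 0" then show "u \<in> UU b c" using gb_nz[of c1 g h u] fgh by (auto simp: UU_def)
    next
      fix u :: "nat list" assume "u \<noteq> []" then show "B2 f u w = gb c2 f u w" using B2 ne by (simp add: isgb_def)
    qed
    finally show "(\<Sum>u\<in>UU b c. a f * b g * c h * (B1 g h u * B2 f u w)) = a f * b g * c h * T3R c1 c2 f g h w"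
      by (simp add: sum_distrib_left[symmetric])
  qed
  finally show ?thesis .
qed


definition cond3 where
  "cond3 f g h w \<longleftrightarrow> length w = length f + length g + length h \<and> surjw w
     \<and> stdw (take (length f) w) = f \<and> stdw (take (length g) (drop (length f) w)) = g
     \<and> stdw (drop (length f + length g) w) = h"

lemma T3L_alt: "T3L c1 c2 f g h w = (if cond3 f g h w then
   c1 (take (length f) w) (take (length g) (drop (length f) w))
   * c2 (take (length f) w @ take (length g) (drop (length f) w)) (drop (length f + length g) w) else 0)"
  by (simp add: T3L_def cond3_def take_add)

lemma T3R_alt: "T3R c1 c2 f g h w = (if cond3 f g h w then
   c1 (take (length g) (drop (length f) w)) (drop (length f + length g) w)
   * c2 (take (length f) w) (take (length g) (drop (length f) w) @ drop (length f + length g) w) else 0)"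
proof -
  have "drop (length f) w = take (length g) (drop (length f) w) @ drop (length f + length g) w"
    by (metis append_take_drop_id drop_drop add.commute)
  then show ?thesis by (simp add: T3R_def cond3_def)
qed

lemma cond3_ne: "cond3 f g h w \<Longrightarrow> f \<noteq> [] \<Longrightarrow> g \<noteq> [] \<Longrightarrow> h \<noteq> [] \<Longrightarrow>
  take (length f) w \<noteq> [] \<and> take (length g) (drop (length f) w) \<noteq> [] \<and> drop (length f + length g) w \<noteq> []"
  unfolding cond3_def by auto

lemma s3: "(\<Sum>f\<in>A. \<Sum>g\<in>B. \<Sum>h\<in>C. K f g h * X f g h) + (\<Sum>f\<in>A. \<Sum>g\<in>B. \<Sum>h\<in>C. K f g h * Y f g h)
  + (q::'k::comm_ring_1) * (\<Sum>f\<in>A. \<Sum>g\<in>B. \<Sum>h\<in>C. K f g h * Z f g h)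
  = (\<Sum>f\<in>A. \<Sum>g\<in>B. \<Sum>h\<in>C. K f g h * (X f g h + Y f g h + q * Z f g h))"
  by (simp add: sum.distrib sum_distrib_left algebra_simps)

context fixes q :: "'k::comm_ring_1" and f g h w :: "nat list"
  assumes ne: "f \<noteq> []" "g \<noteq> []" "h \<noteq> []"
begin
lemma P1: "T3L (cP q) (cP q) f g h w = T3R (cP q) (cP q) f g h w + T3R (cS q) (cP q) f g h w + q * T3R (cD q) (cP q) f g h w"
proof (cases "cond3 f g h w")
  case True
  from cond3_ne[OF True ne] have n1: "take (length f) w \<noteq> []"
    and n2: "take (length g) (drop (length f) w) \<noteq> []" and n3: "drop (length f + length g) w \<noteq> []" by blast+
  show ?thesis unfolding T3L_alt T3R_alt using True by (simp only: if_True blk1[OF n1 n2 n3])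
qed (simp add: T3L_alt T3R_alt)
lemma P2: "T3L (cS q) (cP q) f g h w = T3R (cP q) (cS q) f g h w"
proof (cases "cond3 f g h w")
  case True
  from cond3_ne[OF True ne] have n1: "take (length f) w \<noteq> []"
    and n2: "take (length g) (drop (length f) w) \<noteq> []" and n3: "drop (length f + length g) w \<noteq> []" by blast+
  show ?thesis unfolding T3L_alt T3R_alt using True by (simp only: if_True blk2[OF n1 n2 n3])
qed (simp add: T3L_alt T3R_alt)
lemma P3: "T3L (cP q) (cS q) f g h w + T3L (cS q) (cS q) f g h w + q * T3L (cD q) (cS q) f g h w = T3R (cS q) (cS q) f g h w"
proof (cases "cond3 f g h w")
  case True
  from cond3_ne[OF True ne] have n1: "take (length f) w \<noteq> []"
    and n2: "take (length g) (drop (length f) w) \<noteq> []" and n3: "drop (length f + length g) w \<noteq> []" by blast+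
  show ?thesis unfolding T3L_alt T3R_alt using True by (simp only: if_True blk3[OF n1 n2 n3])
qed (simp add: T3L_alt T3R_alt)
lemma P4: "T3L (cD q) (cD q) f g h w = T3R (cD q) (cD q) f g h w"
proof (cases "cond3 f g h w")
  case True
  from cond3_ne[OF True ne] have n1: "take (length f) w \<noteq> []"
    and n2: "take (length g) (drop (length f) w) \<noteq> []" and n3: "drop (length f + length g) w \<noteq> []" by blast+
  show ?thesis unfolding T3L_alt T3R_alt using True by (simp only: if_True blk4[OF n1 n2 n3])
qed (simp add: T3L_alt T3R_alt)
lemma P5: "T3L (cS q) (cD q) f g h w = T3R (cD q) (cS q) f g h w"
proof (cases "cond3 f g h w")
  case True
  from cond3_ne[OF True ne] have n1: "take (length f) w \<noteq> []"
    and n2: "take (length g) (drop (length f) w) \<noteq> []" and n3: "drop (length f + length g) w \<noteq> []" by blast+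
  show ?thesis unfolding T3L_alt T3R_alt using True by (simp only: if_True blk5[OF n1 n2 n3])
qed (simp add: T3L_alt T3R_alt)
lemma P6: "T3L (cP q) (cD q) f g h w = T3R (cS q) (cD q) f g h w"
proof (cases "cond3 f g h w")
  case True
  from cond3_ne[OF True ne] have n1: "take (length f) w \<noteq> []"
    and n2: "take (length g) (drop (length f) w) \<noteq> []" and n3: "drop (length f + length g) w \<noteq> []" by blast+
  show ?thesis unfolding T3L_alt T3R_alt using True by (simp only: if_True blk6[OF n1 n2 n3])
qed (simp add: T3L_alt T3R_alt)
lemma P7: "T3L (cD q) (cP q) f g h w = T3R (cP q) (cD q) f g h w"
proof (cases "cond3 f g h w")
  case True
  from cond3_ne[OF True ne] have n1: "take (length f) w \<noteq> []"
    and n2: "take (length g) (drop (length f) w) \<noteq> []" and n3: "drop (length f + length g) w \<noteq> []" by blast+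
  show ?thesis unfolding T3L_alt T3R_alt using True by (simp only: if_True blk7[OF n1 n2 n3])
qed (simp add: T3L_alt T3R_alt)
end

lemma inST_ne: "inST a \<Longrightarrow> f \<in> supp a \<Longrightarrow> f \<noteq> []" by (auto simp: inST_def)
lemma inST_fin: "inST a \<Longrightarrow> finite (supp a)" by (auto simp: inST_def)

lemmas cinvs = cinv_cS cinv_cP cinv_cD

theorem tridend:
  fixes q :: "'k::comm_ring_1"
  assumes a: "inST a" and b: "inST b" and c: "inST c"
  shows
       "prec_q q (prec_q q a b) c
         = prec_q q a (vadd (vadd (prec_q q b c) (succ_q q b c)) (smul q (dot_q q b c)))" (is ?A1)
       "prec_q q (succ_q q a b) c = succ_q q a (prec_q q b c)" (is ?A2)
       "succ_q q (vadd (vadd (prec_q q a b) (succ_q q a b)) (smul q (dot_q q a b))) c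
         = succ_q q a (succ_q q b c)" (is ?A3)
       "dot_q q (dot_q q a b) c = dot_q q a (dot_q q b c)" (is ?A4)
       "dot_q q (succ_q q a b) c = succ_q q a (dot_q q b c)" (is ?A5)
       "dot_q q (prec_q q a b) c = dot_q q a (succ_q q b c)" (is ?A6)
       "prec_q q (dot_q q a b) c = dot_q q a (prec_q q b c)" (is ?A7)
proof -
  note iS = isgb_all(1)[of q] and iD = isgb_all(2)[of q] and iP = isgb_all(3)[of q]
  note ne = inST_ne[OF a] inST_ne[OF b] inST_ne[OF c]
  have i1: "inST (prec_q q a b)" "inST (succ_q q a b)" "inST (dot_q q a b)"
    "inST (prec_q q b c)" "inST (succ_q q b c)" "inST (dot_q q b c)"
    unfolding prec_q_def succ_q_def dot_q_def
    by (rule inST_bil(1)[OF a b iP] inST_bil(1)[OF a b iS] inST_bil(1)[OF a b iD]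
        inST_bil(1)[OF b c iP] inST_bil(1)[OF b c iS] inST_bil(1)[OF b c iD])+
  have fin0: "finite (supp a)" "finite (supp b)" "finite (supp c)"
    "finite (supp (prec_q q a b))" "finite (supp (succ_q q a b))" "finite (supp (dot_q q a b))"
    "finite (supp (prec_q q b c))" "finite (supp (succ_q q b c))" "finite (supp (dot_q q b c))"
    using a b c i1 by (auto simp: inST_def)
  have fin1: "finite (supp (vadd (prec_q q a b) (succ_q q a b)))" "finite (supp (vadd (prec_q q b c) (succ_q q b c)))"
     "finite (supp (smul q (dot_q q a b)))" "finite (supp (smul q (dot_q q b c)))"
    by (rule finite_subset[OF supp_vadd], simp add: fin0)+
       (rule finite_subset[OF supp_smul], simp add: fin0)+
  have cg: "\<And>X Y. (\<And>f g h. f \<noteq> [] \<Longrightarrow> g \<noteq> [] \<Longrightarrow> h \<noteq> [] \<Longrightarrow> X f g h = Y f g h) \<Longrightarrow>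
     (\<Sum>f\<in>supp a. \<Sum>g\<in>supp b. \<Sum>h\<in>supp c. a f * b g * c h * X f g h)
   = (\<Sum>f\<in>supp a. \<Sum>g\<in>supp b. \<Sum>h\<in>supp c. a f * b g * c h * Y f g h)"
    by (intro sum.cong refl) (use ne in auto)
  note s3' = s3[where K="\<lambda>f g h. a f * b g * c h" and q=q, simplified]
  show ?A1
  proof
    fix w
    have "prec_q q a (vadd (vadd (prec_q q b c) (succ_q q b c)) (smul q (dot_q q b c))) w
        = prec_q q a (prec_q q b c) w + prec_q q a (succ_q q b c) w + q * prec_q q a (dot_q q b c) w"
      using fin0 fin1 unfolding prec_q_def by (simp add: bil_vadd_r bil_smul_r)
    also have "\<dots> = (\<Sum>f\<in>supp a. \<Sum>g\<in>supp b. \<Sum>h\<in>supp c. a f * b g * c h *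
        (T3R (cP q) (cP q) f g h w + T3R (cS q) (cP q) f g h w + q * T3R (cD q) (cP q) f g h w))"
      unfolding prec_q_def succ_q_def dot_q_def
      by (simp only: RV[OF a b c iP iP cinv_cP] RV[OF a b c iS iP cinv_cS] RV[OF a b c iD iP cinv_cD] s3')
    also have "\<dots> = prec_q q (prec_q q a b) c w"
      unfolding prec_q_def LV[OF a b c iP iP cinv_cP] by (rule cg) (simp add: P1)
    finally show "prec_q q (prec_q q a b) c w = prec_q q a (vadd (vadd (prec_q q b c) (succ_q q b c)) (smul q (dot_q q b c))) w" ..
  qed
  show ?A2
  proof
    fix w
    show "prec_q q (succ_q q a b) c w = succ_q q a (prec_q q b c) w"
      unfolding prec_q_def succ_q_def dot_q_def LV[OF a b c iS iP cinv_cS] RV[OF a b c iP iS cinv_cP]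
      by (rule cg) (simp add: P2)
  qed
  show ?A3
  proof
    fix w
    have "succ_q q (vadd (vadd (prec_q q a b) (succ_q q a b)) (smul q (dot_q q a b))) c w
        = succ_q q (prec_q q a b) c w + succ_q q (succ_q q a b) c w + q * succ_q q (dot_q q a b) c w"
      using fin0 fin1 unfolding succ_q_def by (simp add: bil_vadd_l bil_smul_l)
    also have "\<dots> = (\<Sum>f\<in>supp a. \<Sum>g\<in>supp b. \<Sum>h\<in>supp c. a f * b g * c h *
        (T3L (cP q) (cS q) f g h w + T3L (cS q) (cS q) f g h w + q * T3L (cD q) (cS q) f g h w))"
      unfolding prec_q_def succ_q_def dot_q_def
      by (simp only: LV[OF a b c iP iS cinv_cP] LV[OF a b c iS iS cinv_cS] LV[OF a b c iD iS cinv_cD] s3')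
    also have "\<dots> = succ_q q a (succ_q q b c) w"
      unfolding succ_q_def RV[OF a b c iS iS cinv_cS] by (rule cg) (simp add: P3)
    finally show "succ_q q (vadd (vadd (prec_q q a b) (succ_q q a b)) (smul q (dot_q q a b))) c w = succ_q q a (succ_q q b c) w" .
  qed
  show ?A4
  proof
    fix w
    show "dot_q q (dot_q q a b) c w = dot_q q a (dot_q q b c) w"
      unfolding prec_q_def succ_q_def dot_q_def LV[OF a b c iD iD cinv_cD] RV[OF a b c iD iD cinv_cD]
      by (rule cg) (simp add: P4)
  qed
  show ?A5
  proof
    fix w
    show "dot_q q (succ_q q a b) c w = succ_q q a (dot_q q b c) w"
      unfolding prec_q_def succ_q_def dot_q_def LV[OF a b c iS iD cinv_cS] RV[OF a b c iD iS cinv_cD]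
      by (rule cg) (simp add: P5)
  qed
  show ?A6
  proof
    fix w
    show "dot_q q (prec_q q a b) c w = dot_q q a (succ_q q b c) w"
      unfolding prec_q_def succ_q_def dot_q_def LV[OF a b c iP iD cinv_cP] RV[OF a b c iS iD cinv_cS]
      by (rule cg) (simp add: P6)
  qed
  show ?A7
  proof
    fix w
    show "prec_q q (dot_q q a b) c w = dot_q q a (prec_q q b c) w"
      unfolding prec_q_def succ_q_def dot_q_def LV[OF a b c iD iP cinv_cD] RV[OF a b c iP iD cinv_cP]
      by (rule cg) (simp add: P7)
  qed
qed


definition phi :: "nat list \<Rightarrow> nat \<Rightarrow> nat list \<times> nat list" where
  "phi f j = (corestr f {1..j}, stdw (corestr f {j+1..wmax f}))"

lemma copw_eq: "cop_w f p = (\<Sum>j\<in>{0..wmax f}. if p = phi f j then 1 else 0)"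
  by (cases p) (simp add: cop_w_def phi_def)

lemma copw_sum:
  assumes "finite P" "phi f ` {0..wmax f} \<subseteq> P"
  shows "(\<Sum>p\<in>P. cop_w f p * F p) = (\<Sum>j\<in>{0..wmax f}. (F (phi f j) :: 'k::comm_ring_1))"
proof -
  have "(\<Sum>p\<in>P. cop_w f p * F p) = (\<Sum>p\<in>P. \<Sum>j\<in>{0..wmax f}. if p = phi f j then F p else 0)"
    unfolding copw_eq sum_distrib_right by (intro sum.cong refl) auto
  also have "\<dots> = (\<Sum>j\<in>{0..wmax f}. \<Sum>p\<in>P. if p = phi f j then F p else 0)" by (rule sum.swap)
  also have "\<dots> = (\<Sum>j\<in>{0..wmax f}. F (phi f j))"
  proof (intro sum.cong refl)
    fix j assume "j \<in> {0..wmax f}"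
    then have "phi f j \<in> P" using assms(2) by auto
    then show "(\<Sum>p\<in>P. if p = phi f j then F p else 0) = F (phi f j)" by (simp add: sum.delta[OF assms(1)])
  qed
  finally show ?thesis .
qed

lemma supp_copw: "supp (cop_w f :: _ \<Rightarrow> 'k::comm_ring_1) \<subseteq> phi f ` {0..wmax f}"
proof
  fix p assume "p \<in> supp (cop_w f :: _ \<Rightarrow> 'k)"
  then have "(\<Sum>j\<in>{0..wmax f}. if p = phi f j then 1 else 0 :: 'k) \<noteq> 0" by (simp add: supp_def copw_eq)
  then obtain j where "j \<in> {0..wmax f}" "(if p = phi f j then 1 else 0 :: 'k) \<noteq> 0"
    by (rule sum.not_neutral_contains_not_neutral)
  then have "j \<in> {0..wmax f}" "p = phi f j" by (auto split: if_splits)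
  then show "p \<in> phi f ` {0..wmax f}" by auto
qed

definition CP :: "(nat list \<Rightarrow> 'k::zero) \<Rightarrow> (nat list \<times> nat list) set" where
  "CP x = (\<Union>f\<in>supp x. phi f ` {0..wmax f})"

lemma finite_CP: "finite (supp x) \<Longrightarrow> finite (CP x)"
  unfolding CP_def by auto

lemma supp_cop: "supp (cop x :: _ \<Rightarrow> 'k::comm_ring_1) \<subseteq> CP x"
proof
  fix p assume "p \<in> supp (cop x :: _ \<Rightarrow> 'k)"
  then have "(\<Sum>f\<in>supp x. x f * cop_w f p) \<noteq> (0::'k)" by (simp add: supp_def cop_def)
  then obtain f where "f \<in> supp x" "x f * cop_w f p \<noteq> (0::'k)" by (rule sum.not_neutral_contains_not_neutral)
  then have "f \<in> supp x" "p \<in> supp (cop_w f :: _ \<Rightarrow> 'k)" by (auto simp: supp_def)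
  then show "p \<in> CP x" using supp_copw[of f] unfolding CP_def by auto
qed

lemma surj_vals: "surjw f \<Longrightarrow> set f = {1..wmax f}" by (simp add: surjw_def)

lemma corestr_low: "surjw f \<Longrightarrow> corestr f {1..i} = filter (\<lambda>x. x \<le> i) f"
  unfolding corestr_def using surj_vals[of f] by (intro filter_cong) auto

lemma corestr_high: "surjw f \<Longrightarrow> corestr f {i+1..wmax f} = filter (\<lambda>x. \<not> x \<le> i) f"
  unfolding corestr_def using surj_vals[of f] by (intro filter_cong) auto

lemma cop_unit: "cop (delta [] :: nat list \<Rightarrow> 'k::field) = tens (delta []) (delta [])"
proof
  fix p :: "nat list \<times> nat list"
  have s: "supp (delta [] :: nat list \<Rightarrow> 'k) = {[]}" by (auto simp: supp_def delta_def)
  obtain u v where p: "p = (u, v)" by (cases p)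
  show "cop (delta [] :: nat list \<Rightarrow> 'k) p = tens (delta []) (delta []) p"
    unfolding cop_def s p by (simp add: cop_w_def delta_def tens_def corestr_def stdw_def)
qed

lemma std_Nil_iff2[simp]: "[] = stdw w \<longleftrightarrow> w = []" by (auto simp: stdw_def)

lemma copw_first_Nil:
  assumes "surjw f"
  shows "cop_w f ([], v) = (if v = f then 1 else (0::'k::comm_ring_1))"
proof -
  have "cop_w f ([], v) = (\<Sum>j\<in>{0..wmax f}. if ([], v) = phi f j then 1 else (0::'k))" by (rule copw_eq)
  also have "\<dots> = (\<Sum>j\<in>{0..wmax f}. if j = 0 \<and> v = f then 1 else 0)"
  proof (intro sum.cong refl)
    fix j assume j: "j \<in> {0..wmax f}"
    have e: "corestr f {1..j} = [] \<longleftrightarrow> j = 0 \<or> f = []"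
    proof
      assume "corestr f {1..j} = []"
      then have "\<forall>x\<in>set f. \<not> x \<le> j" using corestr_low[OF assms] by (simp add: filter_empty_conv)
      moreover have "f \<noteq> [] \<Longrightarrow> 1 \<in> set f" using surj_vals[OF assms] wmax_in[of f] by (cases "wmax f = 0") auto
      ultimately show "j = 0 \<or> f = []" by (cases j) auto
    next
      assume "j = 0 \<or> f = []" then show "corestr f {1..j} = []"
        using corestr_low[OF assms] surj_vals[OF assms] by (auto simp: filter_empty_conv)
    qed
    have e2: "stdw (corestr f {1..wmax f}) = f"
      using corestr_low[OF assms, of "wmax f"] surj_vals[OF assms] std_surj[OF assms]
      by (simp add: filter_id_conv)
    show "(if ([], v) = phi f j then 1 else (0::'k)) = (if j = 0 \<and> v = f then 1 else 0)"
      using e e2 j by (auto simp: phi_def)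
  qed
  also have "\<dots> = (if v = f then 1 else 0)" by (simp add: sum.delta)
  finally show ?thesis .
qed

lemma copw_second_Nil:
  assumes "surjw f"
  shows "cop_w f (u, []) = (if u = f then 1 else (0::'k::comm_ring_1))"
proof -
  have "cop_w f (u, []) = (\<Sum>j\<in>{0..wmax f}. if (u, []) = phi f j then 1 else (0::'k))" by (rule copw_eq)
  also have "\<dots> = (\<Sum>j\<in>{0..wmax f}. if j = wmax f \<and> u = f then 1 else 0)"
  proof (intro sum.cong refl)
    fix j assume j: "j \<in> {0..wmax f}"
    have e: "corestr f {j+1..wmax f} = [] \<longleftrightarrow> j = wmax f"
    proof
      assume "corestr f {j+1..wmax f} = []"
      then have "\<forall>x\<in>set f. x \<le> j" using corestr_high[OF assms] by (simp add: filter_empty_conv)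
      moreover have "j < wmax f \<Longrightarrow> wmax f \<in> set f" using surj_vals[OF assms] by auto
      ultimately show "j = wmax f" using j by force
    next
      assume "j = wmax f" then show "corestr f {j+1..wmax f} = []"
        by (auto simp: corestr_def filter_empty_conv)
    qed
    have e2: "corestr f {1..wmax f} = f"
      using corestr_low[OF assms, of "wmax f"] surj_vals[OF assms] by (simp add: filter_id_conv)
    have e3: "([] = stdw (corestr f {Suc j..wmax f})) \<longleftrightarrow> j = wmax f"
      using e std_Nil_iff[of "corestr f {Suc j..wmax f}"] by auto
    show "(if (u, []) = phi f j then 1 else (0::'k)) = (if j = wmax f \<and> u = f then 1 else 0)"
      using e3 e2 j by (auto simp: phi_def)
  qed
  also have "\<dots> = (if u = f then 1 else 0)" by (simp add: sum.delta)
  finally show ?thesis .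
qed

lemma sum_nz_set:
  assumes "finite {u. T u \<noteq> 0}"
  shows "(\<Sum>u\<in>{u. T u \<noteq> 0}. delta [] u * T u) = (T [] :: 'k::comm_ring_1)"
proof (cases "T [] = 0")
  case True
  have "\<forall>u\<in>{u. T u \<noteq> 0}. delta [] u * T u = 0" using True by (auto simp: delta_def)
  then show ?thesis using True by simp
next
  case False
  have "(\<Sum>u\<in>{u. T u \<noteq> 0}. delta [] u * T u) = (\<Sum>u\<in>{u. T u \<noteq> 0}. if u = [] then T u else 0)"
    by (intro sum.cong) (auto simp: delta_def)
  also have "\<dots> = T []" using False by (simp add: sum.delta[OF assms])
  finally show ?thesis .
qed

lemma fin_fst: "finite (supp T) \<Longrightarrow> finite {u. T (u, v) \<noteq> 0}"
proof -
  assume "finite (supp T)"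
  moreover have "{u. T (u, v) \<noteq> 0} \<subseteq> fst ` supp T" by (force simp: supp_def)
  ultimately show ?thesis by (meson finite_imageI finite_subset)
qed

lemma fin_snd: "finite (supp T) \<Longrightarrow> finite {v. T (u, v) \<noteq> 0}"
proof -
  assume "finite (supp T)"
  moreover have "{v. T (u, v) \<noteq> 0} \<subseteq> snd ` supp T" by (force simp: supp_def)
  ultimately show ?thesis by (meson finite_imageI finite_subset)
qed

lemma counit:
  assumes x: "inSTp (x :: nat list \<Rightarrow> 'k::comm_ring_1)"
  shows "eps_id (cop x) = x" "id_eps (cop x) = x"
proof -
  have fx: "finite (supp x)" and sx: "\<And>f. f \<in> supp x \<Longrightarrow> surjw f" using x by (auto simp: inSTp_def)
  have fc: "finite (supp (cop x))" using finite_subset[OF supp_cop finite_CP[OF fx]] .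
  show "eps_id (cop x) = x"
  proof
    fix v
    have "eps_id (cop x) v = cop x ([], v)"
      unfolding eps_id_def by (rule sum_nz_set[OF fin_fst[OF fc]])
    also have "\<dots> = (\<Sum>f\<in>supp x. x f * (if v = f then 1 else 0))"
      unfolding cop_def by (intro sum.cong refl) (simp add: copw_first_Nil sx)
    also have "\<dots> = x v" using fx by (cases "v \<in> supp x") (auto simp: supp_def if_distrib sum.delta cong: if_cong)
    finally show "eps_id (cop x) v = x v" .
  qed
  show "id_eps (cop x) = x"
  proof
    fix u
    have "id_eps (cop x) u = cop x (u, [])"
      unfolding id_eps_def by (rule sum_nz_set[OF fin_snd[OF fc]])
    also have "\<dots> = (\<Sum>f\<in>supp x. x f * (if u = f then 1 else 0))"
      unfolding cop_def by (intro sum.cong refl) (simp add: copw_second_Nil sx)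
    also have "\<dots> = x u" using fx by (cases "u \<in> supp x") (auto simp: supp_def if_distrib sum.delta cong: if_cong)
    finally show "id_eps (cop x) u = x u" .
  qed
qed


fun mrg :: "(nat \<Rightarrow> bool) \<Rightarrow> nat list \<Rightarrow> nat list \<Rightarrow> nat list \<Rightarrow> nat list" where
  "mrg P [] xs ys = []"
| "mrg P (z # zs) xs ys = (if P z then hd xs # mrg P zs (tl xs) ys else hd ys # mrg P zs xs (tl ys))"

lemma ML1: "mrg P zs (map \<alpha> (filter P zs)) (map \<beta> (filter (\<lambda>z. \<not> P z) zs)) = map (\<lambda>z. if P z then \<alpha> z else \<beta> z) zs"
  by (induction zs) auto

lemma std_shift:
  assumes "set x = {t+1..M}"
  shows "stdw x = map (\<lambda>y. y - t) x"
proof -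
  have sm: "smono (set x) (\<lambda>y. y - t)" using assms unfolding smono_def by auto
  have "set (map (\<lambda>y. y - t) x) = {1..M - t}"
  proof -
    have "(\<lambda>y. y - t) ` {t+1..M} = {1..M - t}"
    proof
      show "(\<lambda>y. y - t) ` {t+1..M} \<subseteq> {1..M - t}" by auto
      show "{1..M - t} \<subseteq> (\<lambda>y. y - t) ` {t+1..M}"
      proof
        fix z assume "z \<in> {1..M - t}"
        then have "z + t \<in> {t+1..M}" "z = (z + t) - t" by auto
        then show "z \<in> (\<lambda>y. y - t) ` {t+1..M}" by blast
      qed
    qed
    then show ?thesis using assms by simp
  qed
  then have "surjw (map (\<lambda>y. y - t) x)" using surjw_iff by blast
  then show ?thesis using stdw_map[OF sm] std_surj by metis
qed

definition cStar :: "'k::comm_ring_1 \<Rightarrow> nat list \<Rightarrow> nat list \<Rightarrow> 'k" where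
  "cStar q h k = q ^ capw h k"

lemma surj_ne_wmax: "surjw v \<Longrightarrow> v \<noteq> [] \<Longrightarrow> wmax v \<ge> 1"
  using wmax_in[of v] surj_vals[of v] by fastforce

lemma star_gb:
  assumes "surjw a" "surjw c"
  shows "star_w q a c = gb (cStar q) a c"
proof (intro ext)
  fix u
  show "star_w q a c u = gb (cStar q) a c u"
  proof (cases "a = [] \<or> c = []")
    case True
    then show ?thesis
    proof
      assume a: "a = []"
      show ?thesis using assms(2) std_surj[of u] std_surj[of c]
        by (auto simp: a star_w_def gb_def delta_def cStar_def capw_def)
    next
      assume c: "c = []"
      show ?thesis using assms(1) std_surj[of u] std_surj[of a]
        by (auto simp: c star_w_def gb_def delta_def cStar_def capw_def)
    qed
  next
    case False
    show ?thesis
    proof (cases "length u = length a + length c")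
      case True
      then have ne: "take (length a) u \<noteq> []" "drop (length a) u \<noteq> []" using False by auto
      have "wmax (take (length a) u) = wmax (drop (length a) u) \<Longrightarrow> capw (take (length a) u) (drop (length a) u) \<ge> 1"
        using capw_pos[OF ne] by blast
      then show ?thesis using False
        by (cases "wmax (take (length a) u)" "wmax (drop (length a) u)" rule: linorder_cases)
           (auto simp: star_w_def gb_def prec_b_gb succ_b_gb dot_b_gb cStar_def cS_def cD_def cP_def qpow_dec qpow_dec')
    qed (use False in \<open>auto simp: star_w_def gb_def prec_b_gb succ_b_gb dot_b_gb\<close>)
  qed
qed

lemma gb_emptyL:
  assumes "surjw d" "d \<noteq> []"
  shows "gb c [] d v = (if v = d then c [] d else 0)"
  using assms std_surj[of v] std_surj[of d] by (auto simp: gb_def)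

lemma gb_emptyR:
  assumes "surjw b" "b \<noteq> []"
  shows "gb c b [] v = (if v = b then c b [] else 0)"
  using assms std_surj[of v] std_surj[of b] by (auto simp: gb_def)

lemma opw_gb:
  assumes "surjw b" "surjw d" "b \<noteq> [] \<or> d \<noteq> []"
  shows "succ_w q b d = gb (cS q) b d" "dot_w q b d = gb (cD q) b d" "prec_w q b d = gb (cP q) b d"
proof -
  have w1: "b \<noteq> [] \<Longrightarrow> wmax b \<ge> 1" "d \<noteq> [] \<Longrightarrow> wmax d \<ge> 1" using surj_ne_wmax assms by auto
  show "succ_w q b d = gb (cS q) b d"
    using assms w1 by (auto simp: succ_w_def succ_b_gb gb_emptyL gb_emptyR delta_def cS_def capw_def fun_eq_iff)
  show "dot_w q b d = gb (cD q) b d"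
    using assms w1 by (auto simp: dot_w_def dot_b_gb gb_emptyL gb_emptyR cD_def fun_eq_iff)
  show "prec_w q b d = gb (cP q) b d"
    using assms w1 by (auto simp: prec_w_def prec_b_gb gb_emptyL gb_emptyR delta_def cP_def capw_def fun_eq_iff)
qed


context fixes t :: nat and h k :: "nat list"
begin
abbreviation "hl \<equiv> filter (\<lambda>y. y \<le> t) h"
abbreviation "hh \<equiv> filter (\<lambda>y. \<not> y \<le> t) h"
abbreviation "kl \<equiv> filter (\<lambda>y. y \<le> t) k"
abbreviation "kh \<equiv> filter (\<lambda>y. \<not> y \<le> t) k"

lemma split_cap: "capw h k = capw hl kl + capw hh kh"
proof -
  have "set h \<inter> set k = (set hl \<inter> set kl) \<union> (set hh \<inter> set kh)" by auto
  moreover have "(set hl \<inter> set kl) \<inter> (set hh \<inter> set kh) = {}" by auto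
  ultimately show ?thesis unfolding capw_def by (simp add: card_Un_disjoint)
qed

lemma wmax_low: "wmax (filter (\<lambda>y. y \<le> t) x) \<le> t"
  by (rule wmax_le) auto

lemma wmax_high: "filter (\<lambda>y. \<not> y \<le> t) x \<noteq> [] \<Longrightarrow> wmax (filter (\<lambda>y. \<not> y \<le> t) x) > t"
  using wmax_in[of "filter (\<lambda>y. \<not> y \<le> t) x"] by auto

lemma wmax_split: "wmax x = (if filter (\<lambda>y. \<not> y \<le> t) x = [] then wmax (filter (\<lambda>y. y \<le> t) x) else wmax (filter (\<lambda>y. \<not> y \<le> t) x))"
proof -
  have "set x = set (filter (\<lambda>y. y \<le> t) x @ filter (\<lambda>y. \<not> y \<le> t) x)" by auto
  then have "wmax x = max (wmax (filter (\<lambda>y. y \<le> t) x)) (wmax (filter (\<lambda>y. \<not> y \<le> t) x))"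
    using wmax_set wmax_append by metis
  then show ?thesis using wmax_low[of x] wmax_high[of x] by auto
qed

lemma split_facts:
  "capw h k = capw hl kl + capw hh kh"
  "wmax h = (if hh = [] then wmax hl else wmax hh)"
  "wmax k = (if kh = [] then wmax kl else wmax kh)"
  "wmax hl \<le> t" "wmax kl \<le> t" "hh \<noteq> [] \<Longrightarrow> wmax hh > t" "kh \<noteq> [] \<Longrightarrow> wmax kh > t"
  "hh \<noteq> [] \<Longrightarrow> kh \<noteq> [] \<Longrightarrow> wmax hh = wmax kh \<Longrightarrow> capw hh kh \<ge> 1"
  "capw [] kh = 0" "capw hh [] = 0"
  subgoal by (rule split_cap)
  subgoal by (rule wmax_split)
  subgoal by (rule wmax_split)
  subgoal by (rule wmax_low)
  subgoal by (rule wmax_low)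
  subgoal by (rule wmax_high)
  subgoal by (rule wmax_high)
  subgoal by (rule capw_pos)
  subgoal by (simp add: capw_def)
  subgoal by (simp add: capw_def)
  done

lemma split_cS: "hh \<noteq> [] \<or> kh \<noteq> [] \<Longrightarrow> cS q h k = q ^ capw hl kl * cS q hh kh"
proof -
  assume a: "hh \<noteq> [] \<or> kh \<noteq> []"
  note sf = split_facts
  show ?thesis
  proof (cases "hh = []")
    case True
    then have "kh \<noteq> []" using a by blast
    then show ?thesis using True sf(1,2,3,4,5,7,9) by (simp add: cS_def)
  next
    case False
    show ?thesis
    proof (cases "kh = []")
      case True
      then show ?thesis using False sf(1,2,3,4,5,6,10) by (simp add: cS_def)
    next
      case F2: False
      then show ?thesis using False sf(1,2,3) by (simp add: cS_def power_add)
    qed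
  qed
qed

lemma split_cP: "hh \<noteq> [] \<or> kh \<noteq> [] \<Longrightarrow> cP q h k = q ^ capw hl kl * cP q hh kh"
proof -
  assume a: "hh \<noteq> [] \<or> kh \<noteq> []"
  note sf = split_facts
  show ?thesis
  proof (cases "hh = []")
    case True
    then have "kh \<noteq> []" using a by blast
    then show ?thesis using True sf(1,2,3,4,5,7,9) by (simp add: cP_def)
  next
    case False
    show ?thesis
    proof (cases "kh = []")
      case True
      then show ?thesis using False sf(1,2,3,4,5,6,10) by (simp add: cP_def)
    next
      case F2: False
      then show ?thesis using False sf(1,2,3) by (simp add: cP_def power_add)
    qed
  qed
qed

lemma split_cD: "hh \<noteq> [] \<or> kh \<noteq> [] \<Longrightarrow> cD q h k = q ^ capw hl kl * cD q hh kh"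
proof -
  assume a: "hh \<noteq> [] \<or> kh \<noteq> []"
  show ?thesis
  proof (cases "hh \<noteq> [] \<and> kh \<noteq> [] \<and> wmax hh = wmax kh")
    case True
    then have "capw hh kh \<ge> 1" using split_facts by blast
    then have e: "capw hl kl + capw hh kh - Suc 0 = capw hl kl + (capw hh kh - Suc 0)" by arith
    have "q^(capw hl kl + capw hh kh - Suc 0) = q^capw hl kl * q^(capw hh kh - Suc 0)"
      unfolding e by (rule power_add)
    then show ?thesis using True split_facts(1,2,3) by (simp add: cD_def)
  next
    case False
    then show ?thesis using a split_facts by (auto simp: cD_def)
  qed
qed
end

context fixes t :: nat and H K :: "nat list"
  assumes gt: "\<forall>y\<in>set (H @ K). t < y" and ne: "H \<noteq> [] \<or> K \<noteq> []"
begin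

lemma shift_facts:
  "wmax (map (\<lambda>y. y - t) H) = wmax H - t" "wmax (map (\<lambda>y. y - t) K) = wmax K - t"
  "capw (map (\<lambda>y. y - t) H) (map (\<lambda>y. y - t) K) = capw H K"
  "wmax H - t < wmax K - t \<longleftrightarrow> wmax H < wmax K"
  "wmax H - t = wmax K - t \<longleftrightarrow> wmax H = wmax K"
  "wmax K - t < wmax H - t \<longleftrightarrow> wmax K < wmax H"
proof -
  have sm: "smono (set (H @ K)) (\<lambda>y. y - t)" unfolding smono_def
  proof (intro ballI impI)
    fix x y assume "x \<in> set (H @ K)" "y \<in> set (H @ K)" "x < y"
    moreover then have "t < x" "t < y" using gt by blast+
    ultimately show "x - t < y - t" by arith
  qed
  have hv: "H = [] \<or> wmax H > t" "K = [] \<or> wmax K > t" using gt wmax_in[of H] wmax_in[of K] by auto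
  show "wmax (map (\<lambda>y. y - t) H) = wmax H - t"
    using wmax_map[OF smono_subset[OF sm], of H] by (cases "H = []") auto
  show "wmax (map (\<lambda>y. y - t) K) = wmax K - t"
    using wmax_map[OF smono_subset[OF sm], of K] by (cases "K = []") auto
  show "capw (map (\<lambda>y. y - t) H) (map (\<lambda>y. y - t) K) = capw H K" by (rule capw_map[OF sm])
  show "wmax H - t < wmax K - t \<longleftrightarrow> wmax H < wmax K"
    "wmax H - t = wmax K - t \<longleftrightarrow> wmax H = wmax K"
    "wmax K - t < wmax H - t \<longleftrightarrow> wmax K < wmax H"
    using hv ne by auto
qed

lemma shift_c:
  "cS q (map (\<lambda>y. y - t) H) (map (\<lambda>y. y - t) K) = cS q H K"
  "cD q (map (\<lambda>y. y - t) H) (map (\<lambda>y. y - t) K) = cD q H K"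
  "cP q (map (\<lambda>y. y - t) H) (map (\<lambda>y. y - t) K) = cP q H K"
  using shift_facts by (simp_all add: cS_def cD_def cP_def)
end


definition recw :: "nat list \<Rightarrow> nat list \<Rightarrow> nat \<Rightarrow> nat \<Rightarrow> nat list \<Rightarrow> nat list \<Rightarrow> nat list" where
  "recw f g i j u v = (let t = wmax u; nl = length (filter (\<lambda>x. x \<le> i) f); ml = length (filter (\<lambda>x. \<not> x \<le> i) f) in
     mrg (\<lambda>x. x \<le> i) f (take nl u) (map (\<lambda>y. y + t) (take ml v))
     @ mrg (\<lambda>x. x \<le> j) g (drop nl u) (map (\<lambda>y. y + t) (drop ml v)))"

definition TmF :: "('k::comm_ring_1 \<Rightarrow> nat list \<Rightarrow> nat list \<Rightarrow> nat list \<Rightarrow> 'k) \<Rightarrow> 'k \<Rightarrow> nat list \<Rightarrow> nat list \<Rightarrow> nat list \<Rightarrow> nat list \<Rightarrow> nat list \<times> nat list \<Rightarrow> 'k" where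
  "TmF OPW q a b c d p = (if b = [] \<and> d = [] then tens (OPW q a c) (delta []) p else tens (star_w q a c) (OPW q b d) p)"

definition goodC :: "('k::comm_ring_1 \<Rightarrow> nat list \<Rightarrow> nat list \<Rightarrow> nat list \<Rightarrow> 'k) \<Rightarrow> 'k \<Rightarrow> (nat list \<Rightarrow> nat list \<Rightarrow> 'k) \<Rightarrow> bool" where
  "goodC OPW q C \<longleftrightarrow> (\<forall>b d. surjw b \<longrightarrow> surjw d \<longrightarrow> (b \<noteq> [] \<or> d \<noteq> []) \<longrightarrow> OPW q b d = gb C b d)
   \<and> (\<forall>h k t. (filter (\<lambda>y. \<not> y \<le> t) h \<noteq> [] \<or> filter (\<lambda>y. \<not> y \<le> t) k \<noteq> []) \<longrightarrow>
        C h k = q ^ capw (filter (\<lambda>y. y \<le> t) h) (filter (\<lambda>y. y \<le> t) k) * C (filter (\<lambda>y. \<not> y \<le> t) h) (filter (\<lambda>y. \<not> y \<le> t) k))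
   \<and> (\<forall>H K t. (\<forall>y\<in>set (H @ K). t < y) \<longrightarrow> (H \<noteq> [] \<or> K \<noteq> []) \<longrightarrow> C (map (\<lambda>y. y - t) H) (map (\<lambda>y. y - t) K) = C H K)"

lemma goodC_all: "goodC succ_w q (cS q)" "goodC dot_w q (cD q)" "goodC prec_w q (cP q)"
  unfolding goodC_def
  by (intro conjI allI impI; simp add: opw_gb split_cS split_cD split_cP shift_c; fail)+

locale pic =
  fixes f g :: "nat list" and \<alpha> \<beta> :: "nat \<Rightarrow> nat" and i j t N :: nat
  assumes sf: "surjw f" and sg: "surjw g" and fne: "f \<noteq> []" and gne: "g \<noteq> []"
    and ma: "smono {1..wmax f} \<alpha>" and mb: "smono {1..wmax g} \<beta>"
    and ir: "i \<le> wmax f" and js: "j \<le> wmax g"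
    and ha: "\<forall>z\<in>{1..wmax f}. \<alpha> z \<le> t \<longleftrightarrow> z \<le> i"
    and hb: "\<forall>z\<in>{1..wmax g}. \<beta> z \<le> t \<longleftrightarrow> z \<le> j"
    and setw: "set (map \<alpha> f @ map \<beta> g) = {1..N}"
    and tN: "t \<le> N"
begin

definition "fl = filter (\<lambda>x. x \<le> i) f"
definition "fh = filter (\<lambda>x. \<not> x \<le> i) f"
definition "gl = filter (\<lambda>x. x \<le> j) g"
definition "gh = filter (\<lambda>x. \<not> x \<le> j) g"
definition "w = map \<alpha> f @ map \<beta> g"
definition "u = map \<alpha> fl @ map \<beta> gl"
definition "v = map (\<lambda>z. \<alpha> z - t) fh @ map (\<lambda>z. \<beta> z - t) gh"

lemma sfv: "set f = {1..wmax f}" and sgv: "set g = {1..wmax g}"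
  using sf sg by (simp_all add: surjw_def)

lemma fl_set: "set fl = {1..i}" and fh_set: "set fh = {i+1..wmax f}"
  and gl_set: "set gl = {1..j}" and gh_set: "set gh = {j+1..wmax g}"
  using sfv sgv ir js by (auto simp: fl_def fh_def gl_def gh_def)

lemma surj_fl: "surjw fl" and surj_gl: "surjw gl"
  using fl_set gl_set surjw_iff by blast+

lemma maF: "smono (set f) \<alpha>" and mbG: "smono (set g) \<beta>" using ma mb sfv sgv by simp_all

lemma h_low: "filter (\<lambda>y. y \<le> t) (map \<alpha> f) = map \<alpha> fl"
  unfolding fl_def filter_map using ha sfv by (auto intro!: arg_cong[where f="map \<alpha>"] filter_cong)
lemma h_high: "filter (\<lambda>y. \<not> y \<le> t) (map \<alpha> f) = map \<alpha> fh"
  unfolding fh_def filter_map using ha sfv by (auto intro!: arg_cong[where f="map \<alpha>"] filter_cong)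
lemma k_low: "filter (\<lambda>y. y \<le> t) (map \<beta> g) = map \<beta> gl"
  unfolding gl_def filter_map using hb sgv by (auto intro!: arg_cong[where f="map \<beta>"] filter_cong)
lemma k_high: "filter (\<lambda>y. \<not> y \<le> t) (map \<beta> g) = map \<beta> gh"
  unfolding gh_def filter_map using hb sgv by (auto intro!: arg_cong[where f="map \<beta>"] filter_cong)

lemma fh_gt: "z \<in> set fh \<Longrightarrow> t < \<alpha> z" using ha sfv by (auto simp: fh_def)
lemma gh_gt: "z \<in> set gh \<Longrightarrow> t < \<beta> z" using hb sgv by (auto simp: gh_def)
lemma fl_le: "z \<in> set fl \<Longrightarrow> \<alpha> z \<le> t" using ha sfv by (auto simp: fl_def)
lemma gl_le: "z \<in> set gl \<Longrightarrow> \<beta> z \<le> t" using hb sgv by (auto simp: gl_def)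

lemma surj_w: "surjw w" and wmax_w: "wmax w = N"
  using setw surjw_iff[of w] by (auto simp: w_def surjw_def)

lemma C1: "corestr w {1..t} = u"
  using corestr_low[OF surj_w, of t] h_low k_low by (simp add: w_def u_def)

lemma hi_eq: "corestr w {t+1..wmax w} = map \<alpha> fh @ map \<beta> gh"
  using corestr_high[OF surj_w, of t] h_high k_high by (simp add: w_def)

lemma hi_set: "set (map \<alpha> fh @ map \<beta> gh) = {t+1..N}"
proof -
  have "set (map \<alpha> fh @ map \<beta> gh) = set (filter (\<lambda>y. \<not> y \<le> t) w)"
    using h_high k_high by (simp add: w_def)
  also have "\<dots> = {t+1..N}" using setw by (auto simp: w_def)
  finally show ?thesis .
qed

lemma C2: "stdw (corestr w {t+1..wmax w}) = v"
  unfolding hi_eq std_shift[OF hi_set] by (simp add: v_def)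

lemma u_set: "set u = {1..t}"
proof -
  have "set u = set (filter (\<lambda>y. y \<le> t) w)" using h_low k_low by (simp add: w_def u_def)
  also have "\<dots> = {1..t}" using setw tN by (auto simp: w_def)
  finally show ?thesis .
qed

lemma surj_u: "surjw u" and wmax_u: "wmax u = t"
  using u_set surjw_iff[of u] by (auto simp: surjw_def)

lemma surj_v: "surjw v" using C2 surjw_std by metis

lemma C4: "rk (map \<alpha> f) t = i" "rk (map \<beta> g) t = j"
proof -
  have "{y \<in> set (map \<alpha> f). y \<le> t} = set (filter (\<lambda>y. y \<le> t) (map \<alpha> f))" by auto
  also have "\<dots> = \<alpha> ` set fl" using h_low by simp
  finally have "rk (map \<alpha> f) t = card (\<alpha> ` set fl)" by (simp add: rk_def)
  also have "\<dots> = card (set fl)"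
    by (rule card_image, rule inj_on_subset[OF smono_inj[OF maF]]) (auto simp: fl_def)
  finally show "rk (map \<alpha> f) t = i" using fl_set by simp
  have "{y \<in> set (map \<beta> g). y \<le> t} = set (filter (\<lambda>y. y \<le> t) (map \<beta> g))" by auto
  also have "\<dots> = \<beta> ` set gl" using k_low by simp
  finally have "rk (map \<beta> g) t = card (\<beta> ` set gl)" by (simp add: rk_def)
  also have "\<dots> = card (set gl)"
    by (rule card_image, rule inj_on_subset[OF smono_inj[OF mbG]]) (auto simp: gl_def)
  finally show "rk (map \<beta> g) t = j" using gl_set by simp
qed

lemma std_h: "stdw (map \<alpha> f) = f" and std_k: "stdw (map \<beta> g) = g"
  using stdw_map[OF maF] stdw_map[OF mbG] std_surj[OF sf] std_surj[OF sg] by simp_all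

lemma C5: "gb c f g w = c (map \<alpha> f) (map \<beta> g)"
  using surj_w std_h std_k by (simp add: gb_def w_def)

lemma C6: "recw f g i j u v = w"
proof -
  have l1: "take (length fl) u = map \<alpha> fl" "drop (length fl) u = map \<beta> gl" by (simp_all add: u_def)
  have e1: "map (\<lambda>y. y + t) (map (\<lambda>z. \<alpha> z - t) fh) = map \<alpha> fh"
    by (auto dest: fh_gt)
  have e2: "map (\<lambda>y. y + t) (map (\<lambda>z. \<beta> z - t) gh) = map \<beta> gh"
    by (auto dest: gh_gt)
  have l2: "map (\<lambda>y. y + t) (take (length fh) v) = map \<alpha> fh"
           "map (\<lambda>y. y + t) (drop (length fh) v) = map \<beta> gh"
    using e1 e2 by (simp_all add: v_def)
  show ?thesis
    unfolding recw_def Let_def wmax_u fl_def[symmetric] fh_def[symmetric] l1 l2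
    using ML1[of "\<lambda>x. x \<le> i" f \<alpha> \<alpha>] ML1[of "\<lambda>x. x \<le> j" g \<beta> \<beta>]
    by (simp add: w_def fl_def fh_def gl_def gh_def)
qed

lemma phi_f: "phi f i = (fl, stdw fh)" and phi_g: "phi g j = (gl, stdw gh)"
  unfolding phi_def corestr_low[OF sf] corestr_high[OF sf] corestr_low[OF sg] corestr_high[OF sg]
    fl_def fh_def gl_def gh_def by simp_all

lemma sm_fh: "smono (set fh) (\<lambda>z. \<alpha> z - t)"
  unfolding smono_def
proof (intro ballI impI)
  fix x y assume xy: "x \<in> set fh" "y \<in> set fh" "x < y"
  then have "\<alpha> x < \<alpha> y" using maF by (auto simp: smono_def fh_def)
  moreover have "t < \<alpha> x" using fh_gt xy by blast
  ultimately show "\<alpha> x - t < \<alpha> y - t" by arith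
qed

lemma sm_gh: "smono (set gh) (\<lambda>z. \<beta> z - t)"
  unfolding smono_def
proof (intro ballI impI)
  fix x y assume xy: "x \<in> set gh" "y \<in> set gh" "x < y"
  then have "\<beta> x < \<beta> y" using mbG by (auto simp: smono_def gh_def)
  moreover have "t < \<beta> x" using gh_gt xy by blast
  ultimately show "\<beta> x - t < \<beta> y - t" by arith
qed

lemma C7:
  assumes G: "goodC OPW q C"
  shows "TmF OPW q fl (stdw fh) gl (stdw gh) (u, v) = gb C f g w"
proof (cases "fh = [] \<and> gh = []")
  case True
  have "fl = f" using True by (simp add: fl_def fh_def filter_id_conv filter_empty_conv)
  moreover have "gl = g" using True by (simp add: gl_def gh_def filter_id_conv filter_empty_conv)
  ultimately have "u = w" "v = []" using True by (simp_all add: u_def w_def v_def)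
  then show ?thesis using True G sf sg fne \<open>fl = f\<close> \<open>gl = g\<close>
    by (simp add: TmF_def goodC_def tens_def delta_def)
next
  case False
  have OP: "OPW q (stdw fh) (stdw gh) = gb C (stdw fh) (stdw gh)"
    using G False surjw_std unfolding goodC_def by auto
  have st: "star_w q fl gl = gb (cStar q) fl gl" by (rule star_gb[OF surj_fl surj_gl])
  have sfl: "stdw (map \<alpha> fl) = fl" using stdw_map[OF smono_subset[OF maF]] std_surj[OF surj_fl] by (auto simp: fl_def)
  have sgl: "stdw (map \<beta> gl) = gl" using stdw_map[OF smono_subset[OF mbG]] std_surj[OF surj_gl] by (auto simp: gl_def)
  have e1: "gb (cStar q) fl gl u = q ^ capw (map \<alpha> fl) (map \<beta> gl)"
    using surj_u sfl sgl by (simp add: gb_def u_def cStar_def)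
  have e2: "gb C (stdw fh) (stdw gh) v = C (map (\<lambda>z. \<alpha> z - t) fh) (map (\<lambda>z. \<beta> z - t) gh)"
    using surj_v stdw_map[OF sm_fh] stdw_map[OF sm_gh] by (simp add: gb_def v_def)
  have ne: "filter (\<lambda>y. \<not> y \<le> t) (map \<alpha> f) \<noteq> [] \<or> filter (\<lambda>y. \<not> y \<le> t) (map \<beta> g) \<noteq> []"
    using False h_high k_high by auto
  have "gb C f g w = C (map \<alpha> f) (map \<beta> g)" by (rule C5)
  also have "\<dots> = q ^ capw (map \<alpha> fl) (map \<beta> gl) * C (map \<alpha> fh) (map \<beta> gh)"
    using G ne h_low k_low h_high k_high unfolding goodC_def by metis
  also have "C (map \<alpha> fh) (map \<beta> gh) = C (map (\<lambda>y. y - t) (map \<alpha> fh)) (map (\<lambda>y. y - t) (map \<beta> gh))"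
  proof -
    have "\<forall>y\<in>set (map \<alpha> fh @ map \<beta> gh). t < y" using fh_gt gh_gt by auto
    moreover have "map \<alpha> fh \<noteq> [] \<or> map \<beta> gh \<noteq> []" using False by auto
    ultimately show ?thesis using G unfolding goodC_def by metis
  qed
  finally have fin: "gb C f g w = q ^ capw (map \<alpha> fl) (map \<beta> gl) * C (map (\<lambda>z. \<alpha> z - t) fh) (map (\<lambda>z. \<beta> z - t) gh)"
    by (simp add: o_def)
  have nn: "(stdw fh = [] \<and> stdw gh = []) = False" using False by simp
  show ?thesis unfolding TmF_def nn if_False tens_def using OP st e1 e2 fin by simp
qed

end

lemma std_repr2: "\<exists>\<alpha>. smono (set (stdw w)) \<alpha> \<and> w = map \<alpha> (stdw w) \<and> (\<forall>z\<in>set (stdw w). rk w (\<alpha> z) = z)"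
proof -
  let ?\<alpha> = "inv_into (set w) (rk w)"
  obtain \<alpha> where a: "smono (set (stdw w)) \<alpha>" "w = map \<alpha> (stdw w)" using std_repr by blast
  have "\<forall>z\<in>set (stdw w). rk w (\<alpha> z) = z"
  proof
    fix z assume "z \<in> set (stdw w)"
    then obtain y where y: "y \<in> set w" "z = rk w y" by (auto simp: stdw_rk)
    have "\<alpha> (rk w y) = y"
    proof -
      obtain p where p: "p < length w" "w ! p = y" using y(1) by (auto simp: in_set_conv_nth)
      have "w ! p = \<alpha> (stdw w ! p)" using a(2) p(1) by (metis length_map nth_map)
      then show ?thesis using p by (simp add: stdw_rk)
    qed
    then show "rk w (\<alpha> z) = z" using y by simp
  qed
  then show ?thesis using a by blast
qed

lemma sum_bij_nz:
  assumes fin: "finite S" "finite T"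
    and A: "\<And>a. a \<in> S \<Longrightarrow> g a \<noteq> 0 \<Longrightarrow> j a \<in> T \<and> i (j a) = a \<and> h (j a) = g a"
    and B: "\<And>b. b \<in> T \<Longrightarrow> h b \<noteq> 0 \<Longrightarrow> i b \<in> S \<and> j (i b) = b \<and> g (i b) = h b"
  shows "sum g S = (sum h T :: 'k::comm_monoid_add)"
proof -
  have "sum g S = sum g {a\<in>S. g a \<noteq> 0}" by (rule sum.mono_neutral_right) (use fin in auto)
  also have "\<dots> = sum h {b\<in>T. h b \<noteq> 0}"
  proof (rule sum.reindex_bij_witness[where i=i and j=j])
    fix a assume "a \<in> {a\<in>S. g a \<noteq> 0}"
    then show "i (j a) = a" "j a \<in> {b\<in>T. h b \<noteq> 0}" "h (j a) = g a" using A by auto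
  next
    fix b assume "b \<in> {b\<in>T. h b \<noteq> 0}"
    then show "j (i b) = b" "i b \<in> {a\<in>S. g a \<noteq> 0}" using B by auto
  qed
  also have "\<dots> = sum h T" by (rule sum.mono_neutral_left) (use fin in auto)
  finally show ?thesis .
qed

context
  fixes OPW :: "'k::field \<Rightarrow> nat list \<Rightarrow> nat list \<Rightarrow> nat list \<Rightarrow> 'k" and q :: 'k and C
    and f g :: "nat list"
  assumes G: "goodC OPW q C" and sf: "surjw f" and sg: "surjw g" and fne: "f \<noteq> []" and gne: "g \<noteq> []"
begin

definition "Hij p = (\<lambda>(i, j). TmF OPW q (fst (phi f i)) (snd (phi f i)) (fst (phi g j)) (snd (phi g j)) p)"
definition "Gwt p = (\<lambda>(w, t). gb C f g w * (if p = phi w t then 1 else 0))"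
definition "jmap = (\<lambda>(w, t). (rk (take (length f) w) t, rk (drop (length f) w) t))"
definition "imap p = (\<lambda>(i, j). (recw f g i j (fst p) (snd p), wmax (fst p)))"

lemma sfv: "set f = {1..wmax f}" and sgv: "set g = {1..wmax g}" using sf sg by (simp_all add: surjw_def)

lemma dirA:
  assumes wt: "(w, t) \<in> Sigma W (\<lambda>w. {0..wmax w})" and nz: "Gwt p (w, t) \<noteq> 0"
  shows "jmap (w, t) \<in> {0..wmax f} \<times> {0..wmax g} \<and> imap p (jmap (w, t)) = (w, t) \<and> Hij p (jmap (w, t)) = Gwt p (w, t)"
proof -
  have gbnz: "gb C f g w \<noteq> 0" and pw: "p = phi w t" using nz by (auto simp: Gwt_def split: if_splits)
  have cond: "length w = length f + length g" "surjw w" "stdw (take (length f) w) = f" "stdw (drop (length f) w) = g"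
    using gbnz by (auto simp: gb_def split: if_splits)
  obtain \<alpha> where a: "smono (set f) \<alpha>" "take (length f) w = map \<alpha> f" "\<forall>z\<in>set f. rk (take (length f) w) (\<alpha> z) = z"
    using std_repr2[of "take (length f) w"] cond(3) by auto
  obtain \<beta> where b: "smono (set g) \<beta>" "drop (length f) w = map \<beta> g" "\<forall>z\<in>set g. rk (drop (length f) w) (\<beta> z) = z"
    using std_repr2[of "drop (length f) w"] cond(4) by auto
  define i where "i = rk (map \<alpha> f) t"
  define j where "j = rk (map \<beta> g) t"
  have w: "w = map \<alpha> f @ map \<beta> g" using a(2) b(2) by (metis append_take_drop_id)
  have rkb: "rk (map \<alpha> f) t \<le> card (set f)"
  proof -
    have "rk (map \<alpha> f) t \<le> card (set (map \<alpha> f))" unfolding rk_def by (rule card_mono) auto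
    also have "\<dots> = card (set f)" using card_image[OF smono_inj[OF a(1)]] by simp
    finally show ?thesis .
  qed
  have rkb2: "rk (map \<beta> g) t \<le> card (set g)"
  proof -
    have "rk (map \<beta> g) t \<le> card (set (map \<beta> g))" unfolding rk_def by (rule card_mono) auto
    also have "\<dots> = card (set g)" using card_image[OF smono_inj[OF b(1)]] by simp
    finally show ?thesis .
  qed
  have ha: "\<forall>z\<in>{1..wmax f}. \<alpha> z \<le> t \<longleftrightarrow> z \<le> i"
  proof
    fix z assume z: "z \<in> {1..wmax f}"
    then have zs: "z \<in> set f" using sfv by simp
    have r: "rk (map \<alpha> f) (\<alpha> z) = z" using a(2,3) zs by simp
    show "\<alpha> z \<le> t \<longleftrightarrow> z \<le> i"
    proof
      assume "\<alpha> z \<le> t" then show "z \<le> i" using rk_le[of "\<alpha> z" t "map \<alpha> f"] r by (simp add: i_def)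
    next
      assume "z \<le> i"
      show "\<alpha> z \<le> t"
      proof (rule ccontr)
        assume "\<not> \<alpha> z \<le> t"
        then have "rk (map \<alpha> f) t < rk (map \<alpha> f) (\<alpha> z)" using zs by (intro rk_less) auto
        then show False using r \<open>z \<le> i\<close> by (simp add: i_def)
      qed
    qed
  qed
  have hb: "\<forall>z\<in>{1..wmax g}. \<beta> z \<le> t \<longleftrightarrow> z \<le> j"
  proof
    fix z assume z: "z \<in> {1..wmax g}"
    then have zs: "z \<in> set g" using sgv by simp
    have r: "rk (map \<beta> g) (\<beta> z) = z" using b(2,3) zs by simp
    show "\<beta> z \<le> t \<longleftrightarrow> z \<le> j"
    proof
      assume "\<beta> z \<le> t" then show "z \<le> j" using rk_le[of "\<beta> z" t "map \<beta> g"] r by (simp add: j_def)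
    next
      assume "z \<le> j"
      show "\<beta> z \<le> t"
      proof (rule ccontr)
        assume "\<not> \<beta> z \<le> t"
        then have "rk (map \<beta> g) t < rk (map \<beta> g) (\<beta> z)" using zs by (intro rk_less) auto
        then show False using r \<open>z \<le> j\<close> by (simp add: j_def)
      qed
    qed
  qed
  have cf: "card (set f) = wmax f" "card (set g) = wmax g" using sfv sgv by simp_all
  interpret P: pic f g \<alpha> \<beta> i j t "wmax w"
  proof
    show "surjw f" "surjw g" "f \<noteq> []" "g \<noteq> []" by (fact sf sg fne gne)+
    show "smono {1..wmax f} \<alpha>" "smono {1..wmax g} \<beta>" using a(1) b(1) sfv sgv by simp_all
    show "i \<le> wmax f" "j \<le> wmax g" using rkb rkb2 cf by (simp_all add: i_def j_def)
    show "\<forall>z\<in>{1..wmax f}. \<alpha> z \<le> t \<longleftrightarrow> z \<le> i" by (fact ha)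
    show "\<forall>z\<in>{1..wmax g}. \<beta> z \<le> t \<longleftrightarrow> z \<le> j" by (fact hb)
    show "set (map \<alpha> f @ map \<beta> g) = {1..wmax w}" using cond(2) w by (simp add: surjw_def)
    show "t \<le> wmax w" using wt by simp
  qed
  have wP: "P.w = w" by (simp add: P.w_def w)
  have pP: "p = (P.u, P.v)" using pw P.C1 P.C2 wP by (simp add: phi_def)
  have jm: "jmap (w, t) = (i, j)" using a(2) b(2) by (simp add: jmap_def i_def j_def)
  show ?thesis
  proof (intro conjI)
    show "jmap (w, t) \<in> {0..wmax f} \<times> {0..wmax g}" using jm P.ir P.js by simp
    show "imap p (jmap (w, t)) = (w, t)" using jm pP P.C6 P.wmax_u wP by (simp add: imap_def)
    show "Hij p (jmap (w, t)) = Gwt p (w, t)"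
      using jm pP P.C7[OF G] P.phi_f P.phi_g wP pw by (simp add: Hij_def Gwt_def)
  qed
qed

lemma dirB_common:
  assumes P: "pic f g \<alpha> \<beta> i j t N" and W: "\<And>w. gb C f g w \<noteq> 0 \<Longrightarrow> w \<in> W"
    and pu: "p = (map \<alpha> (filter (\<lambda>x. x \<le> i) f) @ map \<beta> (filter (\<lambda>x. x \<le> j) g),
                 map (\<lambda>z. \<alpha> z - t) (filter (\<lambda>x. \<not> x \<le> i) f) @ map (\<lambda>z. \<beta> z - t) (filter (\<lambda>x. \<not> x \<le> j) g))"
    and nz: "Hij p (i, j) \<noteq> 0"
  shows "imap p (i, j) \<in> Sigma W (\<lambda>w. {0..wmax w}) \<and> jmap (imap p (i, j)) = (i, j) \<and> Gwt p (imap p (i, j)) = Hij p (i, j)"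
proof -
  interpret P: pic f g \<alpha> \<beta> i j t N by (rule P)
  have pP: "p = (P.u, P.v)" using pu by (simp add: P.u_def P.v_def P.fl_def P.fh_def P.gl_def P.gh_def)
  have im: "imap p (i, j) = (P.w, t)" using pP P.C6 P.wmax_u by (simp add: imap_def)
  have ph: "phi P.w t = (P.u, P.v)" using P.C1 P.C2 by (simp add: phi_def)
  have H: "Hij p (i, j) = gb C f g P.w" using pP P.C7[OF G] P.phi_f P.phi_g by (simp add: Hij_def)
  have G1: "Gwt p (P.w, t) = gb C f g P.w" using pP ph by (simp add: Gwt_def)
  have inW: "P.w \<in> W" using W nz H by simp
  have tl: "t \<le> wmax P.w" using P.wmax_w P.tN by simp
  have jm: "jmap (P.w, t) = (i, j)" using P.C4 by (simp add: jmap_def P.w_def)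
  show ?thesis using im inW tl jm G1 H by simp
qed

lemma dirB:
  assumes ij: "(i, j) \<in> {0..wmax f} \<times> {0..wmax g}" and nz: "Hij p (i, j) \<noteq> 0"
    and W: "\<And>w. gb C f g w \<noteq> 0 \<Longrightarrow> w \<in> W"
  shows "imap p (i, j) \<in> Sigma W (\<lambda>w. {0..wmax w}) \<and> jmap (imap p (i, j)) = (i, j) \<and> Gwt p (imap p (i, j)) = Hij p (i, j)"
proof -
  obtain u v where p: "p = (u, v)" by (cases p)
  define fl where "fl = filter (\<lambda>x. x \<le> i) f"
  define fh where "fh = filter (\<lambda>x. \<not> x \<le> i) f"
  define gl where "gl = filter (\<lambda>x. x \<le> j) g"
  define gh where "gh = filter (\<lambda>x. \<not> x \<le> j) g"
  have ir: "i \<le> wmax f" and js: "j \<le> wmax g" using ij by auto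
  have phf: "phi f i = (fl, stdw fh)" and phg: "phi g j = (gl, stdw gh)"
    unfolding phi_def corestr_low[OF sf] corestr_high[OF sf] corestr_low[OF sg] corestr_high[OF sg]
      fl_def fh_def gl_def gh_def by simp_all
  have Hv: "Hij p (i, j) = TmF OPW q fl (stdw fh) gl (stdw gh) (u, v)" by (simp add: Hij_def phf phg p)
  have flset: "set fl = {1..i}" and glset: "set gl = {1..j}" and fhset: "set fh = {i+1..wmax f}"
    and ghset: "set gh = {j+1..wmax g}"
    using sfv sgv ir js by (auto simp: fl_def gl_def fh_def gh_def)
  have OP: "\<And>b d. surjw b \<Longrightarrow> surjw d \<Longrightarrow> b \<noteq> [] \<or> d \<noteq> [] \<Longrightarrow> OPW q b d = gb C b d"
    using G by (simp add: goodC_def)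
  show ?thesis
  proof (cases "fh = [] \<and> gh = []")
    case True
    have e: "fl = f" "gl = g" using True by (simp_all add: fl_def fh_def gl_def gh_def filter_id_conv filter_empty_conv)
    have "OPW q f g u * delta [] v \<noteq> 0" using nz True e by (simp add: Hv TmF_def tens_def)
    then have v0: "v = []" and gnz: "gb C f g u \<noteq> 0" using OP[OF sf sg] fne by (auto simp: delta_def split: if_splits)
    have cond: "length u = length f + length g" "surjw u" "stdw (take (length f) u) = f" "stdw (drop (length f) u) = g"
      using gnz by (auto simp: gb_def split: if_splits)
    obtain \<alpha> where a: "smono (set f) \<alpha>" "take (length f) u = map \<alpha> f"
      using std_repr[of "take (length f) u"] cond(3) by auto
    obtain \<beta> where b: "smono (set g) \<beta>" "drop (length f) u = map \<beta> g"
      using std_repr[of "drop (length f) u"] cond(4) by auto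
    have u: "u = map \<alpha> f @ map \<beta> g" using a(2) b(2) by (metis append_take_drop_id)
    have allle: "\<forall>x\<in>set f. x \<le> i" "\<forall>x\<in>set g. x \<le> j" using True by (simp_all add: fh_def gh_def filter_empty_conv)
    have Pi: "pic f g \<alpha> \<beta> i j (wmax u) (wmax u)"
    proof
      show "surjw f" "surjw g" "f \<noteq> []" "g \<noteq> []" by (fact sf sg fne gne)+
      show "smono {1..wmax f} \<alpha>" "smono {1..wmax g} \<beta>" using a(1) b(1) sfv sgv by simp_all
      show "i \<le> wmax f" "j \<le> wmax g" by (fact ir js)+
      show "\<forall>z\<in>{1..wmax f}. \<alpha> z \<le> wmax u \<longleftrightarrow> z \<le> i"
      proof
        fix z assume "z \<in> {1..wmax f}"
        then have zs: "z \<in> set f" using sfv by simp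
        then have "\<alpha> z \<in> set u" using u by auto
        then have "\<alpha> z \<le> wmax u" by (rule wmax_ge)
        moreover have "z \<le> i" using allle(1) zs by blast
        ultimately show "\<alpha> z \<le> wmax u \<longleftrightarrow> z \<le> i" by simp
      qed
      show "\<forall>z\<in>{1..wmax g}. \<beta> z \<le> wmax u \<longleftrightarrow> z \<le> j"
      proof
        fix z assume "z \<in> {1..wmax g}"
        then have zs: "z \<in> set g" using sgv by simp
        then have "\<beta> z \<in> set u" using u by auto
        then have "\<beta> z \<le> wmax u" by (rule wmax_ge)
        moreover have "z \<le> j" using allle(2) zs by blast
        ultimately show "\<beta> z \<le> wmax u \<longleftrightarrow> z \<le> j" by simp
      qed
      show "set (map \<alpha> f @ map \<beta> g) = {1..wmax u}" using cond(2) u by (simp add: surjw_def)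
      show "wmax u \<le> wmax u" by simp
    qed
    show ?thesis
    proof (rule dirB_common[OF Pi W _ nz])
      have e1: "filter (\<lambda>x. x \<le> i) f = f" "filter (\<lambda>x. x \<le> j) g = g" using e by (simp_all only: fl_def gl_def)
      have e2: "filter (\<lambda>x. \<not> x \<le> i) f = []" "filter (\<lambda>x. \<not> x \<le> j) g = []"
        using True by (simp_all only: fh_def gh_def)
      show "p = (map \<alpha> (filter (\<lambda>x. x \<le> i) f) @ map \<beta> (filter (\<lambda>x. x \<le> j) g),
         map (\<lambda>z. \<alpha> z - wmax u) (filter (\<lambda>x. \<not> x \<le> i) f) @ map (\<lambda>z. \<beta> z - wmax u) (filter (\<lambda>x. \<not> x \<le> j) g))"
        by (simp only: p v0 u e1 e2 list.map(1) append.simps(1))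
    qed
  next
    case False
    have nn: "(stdw fh = [] \<and> stdw gh = []) = False" using False by simp
    have prod: "star_w q fl gl u * OPW q (stdw fh) (stdw gh) v \<noteq> 0"
      using nz unfolding Hv TmF_def nn if_False tens_def by simp
    have sfl: "surjw fl" "surjw gl" using flset glset surjw_iff by blast+
    have "star_w q fl gl u = gb (cStar q) fl gl u" using star_gb[OF sfl, of q] by simp
    then have unz: "gb (cStar q) fl gl u \<noteq> 0" using prod by auto
    have vnz: "gb C (stdw fh) (stdw gh) v \<noteq> 0" using prod OP[OF surjw_std surjw_std] False by auto
    have cu: "length u = length fl + length gl" "surjw u" "stdw (take (length fl) u) = fl" "stdw (drop (length fl) u) = gl"
      using unz by (auto simp: gb_def split: if_splits)
    have cv: "length v = length fh + length gh" "surjw v" "stdw (take (length fh) v) = stdw fh" "stdw (drop (length fh) v) = stdw gh"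
      using vnz by (auto simp: gb_def split: if_splits)
    obtain \<alpha>1 where a1: "smono (set fl) \<alpha>1" "take (length fl) u = map \<alpha>1 fl"
      using std_eq_map[of fl "take (length fl) u"] cu(3) std_surj[OF sfl(1)] by auto
    obtain \<beta>1 where b1: "smono (set gl) \<beta>1" "drop (length fl) u = map \<beta>1 gl"
      using std_eq_map[of gl "drop (length fl) u"] cu(4) std_surj[OF sfl(2)] by auto
    obtain \<alpha>2 where a2: "smono (set fh) \<alpha>2" "take (length fh) v = map \<alpha>2 fh"
      using std_eq_map[of fh "take (length fh) v"] cv(3) by auto
    obtain \<beta>2 where b2: "smono (set gh) \<beta>2" "drop (length fh) v = map \<beta>2 gh"
      using std_eq_map[of gh "drop (length fh) v"] cv(4) by auto
    define t where "t = wmax u"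
    define \<alpha> where "\<alpha> = (\<lambda>z. if z \<le> i then \<alpha>1 z else \<alpha>2 z + t)"
    define \<beta> where "\<beta> = (\<lambda>z. if z \<le> j then \<beta>1 z else \<beta>2 z + t)"
    have u: "u = map \<alpha>1 fl @ map \<beta>1 gl" using a1(2) b1(2) by (metis append_take_drop_id)
    have v: "v = map \<alpha>2 fh @ map \<beta>2 gh" using a2(2) b2(2) by (metis append_take_drop_id)
    have uset: "set u = {1..t}" using cu(2) by (simp add: surjw_def t_def)
    have vset: "set v = {1..wmax v}" using cv(2) by (simp add: surjw_def)
    have a1le: "\<And>z. z \<in> set fl \<Longrightarrow> \<alpha>1 z \<le> t" using uset u by auto
    have b1le: "\<And>z. z \<in> set gl \<Longrightarrow> \<beta>1 z \<le> t" using uset u by auto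
    have a2ge: "\<And>z. z \<in> set fh \<Longrightarrow> 1 \<le> \<alpha>2 z" using vset v by auto
    have b2ge: "\<And>z. z \<in> set gh \<Longrightarrow> 1 \<le> \<beta>2 z" using vset v by auto
    have ma: "smono {1..wmax f} \<alpha>"
      unfolding smono_def
    proof (intro ballI impI)
      fix x y assume x: "x \<in> {1..wmax f}" and y: "y \<in> {1..wmax f}" and xy: "x < y"
      show "\<alpha> x < \<alpha> y"
      proof (cases "y \<le> i")
        case True
        then have "x \<in> set fl" "y \<in> set fl" using x y xy flset by auto
        then show ?thesis using a1(1) xy True by (auto simp: \<alpha>_def smono_def)
      next
        case F: False
        show ?thesis
        proof (cases "x \<le> i")
          case True
          then have "x \<in> set fl" "y \<in> set fh" using x y F flset fhset by auto
          then show ?thesis using a1le a2ge True F by (fastforce simp: \<alpha>_def)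
        next
          case False
          then have "x \<in> set fh" "y \<in> set fh" using x y F fhset by auto
          then show ?thesis using a2(1) xy False F by (auto simp: \<alpha>_def smono_def)
        qed
      qed
    qed
    have mb: "smono {1..wmax g} \<beta>"
      unfolding smono_def
    proof (intro ballI impI)
      fix x y assume x: "x \<in> {1..wmax g}" and y: "y \<in> {1..wmax g}" and xy: "x < y"
      show "\<beta> x < \<beta> y"
      proof (cases "y \<le> j")
        case True
        then have "x \<in> set gl" "y \<in> set gl" using x y xy glset by auto
        then show ?thesis using b1(1) xy True by (auto simp: \<beta>_def smono_def)
      next
        case F: False
        show ?thesis
        proof (cases "x \<le> j")
          case True
          then have "x \<in> set gl" "y \<in> set gh" using x y F glset ghset by auto
          then show ?thesis using b1le b2ge True F by (fastforce simp: \<beta>_def)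
        next
          case False
          then have "x \<in> set gh" "y \<in> set gh" using x y F ghset by auto
          then show ?thesis using b2(1) xy False F by (auto simp: \<beta>_def smono_def)
        qed
      qed
    qed
    have ha: "\<forall>z\<in>{1..wmax f}. \<alpha> z \<le> t \<longleftrightarrow> z \<le> i"
    proof
      fix z assume z: "z \<in> {1..wmax f}"
      show "\<alpha> z \<le> t \<longleftrightarrow> z \<le> i"
      proof (cases "z \<le> i")
        case True then show ?thesis using a1le z flset by (auto simp: \<alpha>_def)
      next
        case False then show ?thesis using a2ge[of z] z fhset by (auto simp: \<alpha>_def)
      qed
    qed
    have hb: "\<forall>z\<in>{1..wmax g}. \<beta> z \<le> t \<longleftrightarrow> z \<le> j"
    proof
      fix z assume z: "z \<in> {1..wmax g}"
      show "\<beta> z \<le> t \<longleftrightarrow> z \<le> j"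
      proof (cases "z \<le> j")
        case True then show ?thesis using b1le z glset by (auto simp: \<beta>_def)
      next
        case False then show ?thesis using b2ge[of z] z ghset by (auto simp: \<beta>_def)
      qed
    qed
    have mapf: "map \<alpha> fl = map \<alpha>1 fl" "map \<alpha> fh = map (\<lambda>z. \<alpha>2 z + t) fh"
      "map \<beta> gl = map \<beta>1 gl" "map \<beta> gh = map (\<lambda>z. \<beta>2 z + t) gh"
      by (auto simp: \<alpha>_def \<beta>_def fl_def fh_def gl_def gh_def)
    have setf: "set (map \<alpha> f) = set (map \<alpha> fl) \<union> set (map \<alpha> fh)"
      "set (map \<beta> g) = set (map \<beta> gl) \<union> set (map \<beta> gh)"
      by (auto simp: fl_def fh_def gl_def gh_def)
    have sw: "set (map \<alpha> f @ map \<beta> g) = set u \<union> (\<lambda>y. y + t) ` set v"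
      using setf mapf u v by auto
    have shs: "(\<lambda>y. y + t) ` {1..wmax v} = {t+1..t + wmax v}"
    proof
      show "(\<lambda>y. y + t) ` {1..wmax v} \<subseteq> {t+1..t + wmax v}" by auto
      show "{t+1..t + wmax v} \<subseteq> (\<lambda>y. y + t) ` {1..wmax v}"
      proof
        fix z assume "z \<in> {t+1..t + wmax v}"
        then have "z - t \<in> {1..wmax v}" "z = (z - t) + t" by auto
        then show "z \<in> (\<lambda>y. y + t) ` {1..wmax v}" by blast
      qed
    qed
    have Pi: "pic f g \<alpha> \<beta> i j t (t + wmax v)"
    proof
      show "surjw f" "surjw g" "f \<noteq> []" "g \<noteq> []" by (fact sf sg fne gne)+
      show "smono {1..wmax f} \<alpha>" "smono {1..wmax g} \<beta>" by (fact ma mb)+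
      show "i \<le> wmax f" "j \<le> wmax g" by (fact ir js)+
      show "\<forall>z\<in>{1..wmax f}. \<alpha> z \<le> t \<longleftrightarrow> z \<le> i" by (fact ha)
      show "\<forall>z\<in>{1..wmax g}. \<beta> z \<le> t \<longleftrightarrow> z \<le> j" by (fact hb)
      show "set (map \<alpha> f @ map \<beta> g) = {1..t + wmax v}" using sw uset vset shs by auto
      show "t \<le> t + wmax v" by simp
    qed
    have pe: "p = (map \<alpha> fl @ map \<beta> gl, map (\<lambda>z. \<alpha> z - t) fh @ map (\<lambda>z. \<beta> z - t) gh)"
    proof -
      have "map (\<lambda>z. \<alpha> z - t) fh = map \<alpha>2 fh" "map (\<lambda>z. \<beta> z - t) gh = map \<beta>2 gh"
        by (auto simp: \<alpha>_def \<beta>_def fh_def gh_def)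
      then show ?thesis using p u v mapf by simp
    qed
    show ?thesis
    proof (rule dirB_common[OF Pi W _ nz])
      show "p = (map \<alpha> (filter (\<lambda>x. x \<le> i) f) @ map \<beta> (filter (\<lambda>x. x \<le> j) g),
         map (\<lambda>z. \<alpha> z - t) (filter (\<lambda>x. \<not> x \<le> i) f) @ map (\<lambda>z. \<beta> z - t) (filter (\<lambda>x. \<not> x \<le> j) g))"
        using pe by (simp only: fl_def fh_def gl_def gh_def)
    qed
  qed
qed

lemma BI:
  assumes fW: "finite W" and W: "\<And>w. gb C f g w \<noteq> 0 \<Longrightarrow> w \<in> W"
  shows "(\<Sum>w\<in>W. gb C f g w * cop_w w p)
    = (\<Sum>i\<in>{0..wmax f}. \<Sum>j\<in>{0..wmax g}. TmF OPW q (fst (phi f i)) (snd (phi f i)) (fst (phi g j)) (snd (phi g j)) p)"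
proof -
  have "(\<Sum>w\<in>W. gb C f g w * cop_w w p) = (\<Sum>w\<in>W. \<Sum>t\<in>{0..wmax w}. Gwt p (w, t))"
    by (simp add: copw_eq sum_distrib_left Gwt_def)
  also have "\<dots> = sum (Gwt p) (Sigma W (\<lambda>w. {0..wmax w}))"
    using sum.Sigma[OF fW, of "\<lambda>w. {0..wmax w}" "\<lambda>w t. Gwt p (w, t)"] by simp
  also have "\<dots> = sum (Hij p) ({0..wmax f} \<times> {0..wmax g})"
  proof (rule sum_bij_nz[where j=jmap and i="imap p"])
    show "finite (Sigma W (\<lambda>w. {0..wmax w}))" using fW by auto
    show "finite ({0..wmax f} \<times> {0..wmax g})" by auto
  next
    fix a assume "a \<in> Sigma W (\<lambda>w. {0..wmax w})" "Gwt p a \<noteq> 0"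
    then show "jmap a \<in> {0..wmax f} \<times> {0..wmax g} \<and> imap p (jmap a) = a \<and> Hij p (jmap a) = Gwt p a"
      using dirA by (cases a) blast
  next
    fix b assume "b \<in> {0..wmax f} \<times> {0..wmax g}" "Hij p b \<noteq> 0"
    then show "imap p b \<in> Sigma W (\<lambda>w. {0..wmax w}) \<and> jmap (imap p b) = b \<and> Gwt p (imap p b) = Hij p b"
      using dirB[OF _ _ W] by (cases b) blast
  qed
  also have "\<dots> = (\<Sum>i\<in>{0..wmax f}. \<Sum>j\<in>{0..wmax g}. TmF OPW q (fst (phi f i)) (snd (phi f i)) (fst (phi g j)) (snd (phi g j)) p)"
    by (simp add: sum.cartesian_product Hij_def)
  finally show ?thesis .
qed

end

lemma CP_phi: "f \<in> supp x \<Longrightarrow> phi f ` {0..wmax f} \<subseteq> CP x"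
  unfolding CP_def by auto

lemma compat_main:
  fixes q :: "'k::field"
  assumes x: "inST x" and y: "inST y" and G: "goodC OPW q C" and B: "isgb (OPW q) C"
  shows "cop (bil (OPW q) x y) = compat_rhs q OPW x y"
proof
  fix p
  have fx: "finite (supp x)" and fy: "finite (supp y)" using x y by (auto simp: inST_def)
  have sx: "\<And>f. f \<in> supp x \<Longrightarrow> surjw f \<and> f \<noteq> []" and sy: "\<And>g. g \<in> supp y \<Longrightarrow> surjw g \<and> g \<noteq> []"
    using x y by (auto simp: inST_def)
  have fU: "finite (UU x y)" using fx fy by (rule finite_UU)
  define T where "T = (\<lambda>P1 P2. TmF OPW q (fst P1) (snd P1) (fst P2) (snd P2) p)"
  define RHS where "RHS = (\<lambda>f g. \<Sum>i\<in>{0..wmax f}. \<Sum>j\<in>{0..wmax g}. T (phi f i) (phi g j))"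
  have "cop (bil (OPW q) x y) p = (\<Sum>w\<in>UU x y. bil (OPW q) x y w * cop_w w p)"
    unfolding cop_def
    by (rule sum.mono_neutral_left[OF fU inST_bil(2)[OF x y B]]) (auto simp: supp_def)
  also have "\<dots> = (\<Sum>w\<in>UU x y. \<Sum>f\<in>supp x. \<Sum>g\<in>supp y. x f * y g * (OPW q f g w * cop_w w p))"
    unfolding bil_def sum_distrib_right by (simp add: mult_ac)
  also have "\<dots> = (\<Sum>f\<in>supp x. \<Sum>g\<in>supp y. \<Sum>w\<in>UU x y. x f * y g * (OPW q f g w * cop_w w p))"
  proof -
    have "(\<Sum>w\<in>UU x y. \<Sum>f\<in>supp x. \<Sum>g\<in>supp y. x f * y g * (OPW q f g w * cop_w w p))
      = (\<Sum>f\<in>supp x. \<Sum>w\<in>UU x y. \<Sum>g\<in>supp y. x f * y g * (OPW q f g w * cop_w w p))" by (rule sum.swap)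
    also have "\<dots> = (\<Sum>f\<in>supp x. \<Sum>g\<in>supp y. \<Sum>w\<in>UU x y. x f * y g * (OPW q f g w * cop_w w p))"
      by (rule sum.cong[OF refl], rule sum.swap)
    finally show ?thesis .
  qed
  also have "\<dots> = (\<Sum>f\<in>supp x. \<Sum>g\<in>supp y. x f * y g * RHS f g)"
  proof (intro sum.cong refl)
    fix f g assume f: "f \<in> supp x" and g: "g \<in> supp y"
    have "(\<Sum>w\<in>UU x y. OPW q f g w * cop_w w p) = (\<Sum>w\<in>UU x y. gb C f g w * cop_w w p)"
      using B sx[OF f] sy[OF g] by (simp add: isgb_def)
    also have "\<dots> = RHS f g"
      unfolding RHS_def T_def
    proof (rule BI[OF G])
      show "surjw f" "surjw g" "f \<noteq> []" "g \<noteq> []" using sx[OF f] sy[OF g] by auto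
      show "finite (UU x y)" by (fact fU)
      fix w assume "gb C f g w \<noteq> 0"
      then show "w \<in> UU x y" using gb_nz[of C f g w] f g by (auto simp: UU_def)
    qed
    finally show "(\<Sum>w\<in>UU x y. x f * y g * (OPW q f g w * cop_w w p)) = x f * y g * RHS f g"
      by (simp add: sum_distrib_left[symmetric])
  qed
  finally have L: "cop (bil (OPW q) x y) p = (\<Sum>f\<in>supp x. \<Sum>g\<in>supp y. x f * y g * RHS f g)" .
  have fCx: "finite (CP x)" and fCy: "finite (CP y)" using fx fy by (auto intro: finite_CP)
  have "compat_rhs q OPW x y p = (\<Sum>P1\<in>supp (cop x). \<Sum>P2\<in>supp (cop y). cop x P1 * cop y P2 * T P1 P2)"
    unfolding compat_rhs_def T_def TmF_def by (simp add: case_prod_unfold)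
  also have "\<dots> = (\<Sum>P1\<in>CP x. \<Sum>P2\<in>CP y. cop x P1 * cop y P2 * T P1 P2)"
  proof -
    have "(\<Sum>P1\<in>supp (cop x). \<Sum>P2\<in>supp (cop y). cop x P1 * cop y P2 * T P1 P2)
        = (\<Sum>P1\<in>supp (cop x). \<Sum>P2\<in>CP y. cop x P1 * cop y P2 * T P1 P2)"
      by (rule sum.cong[OF refl], rule sum.mono_neutral_left[OF fCy supp_cop]) (auto simp: supp_def)
    also have "\<dots> = (\<Sum>P1\<in>CP x. \<Sum>P2\<in>CP y. cop x P1 * cop y P2 * T P1 P2)"
      by (rule sum.mono_neutral_left[OF fCx supp_cop]) (auto simp: supp_def)
    finally show ?thesis .
  qed
  also have "\<dots> = (\<Sum>P1\<in>CP x. \<Sum>P2\<in>CP y. \<Sum>g\<in>supp y. \<Sum>f\<in>supp x. x f * y g * (cop_w f P1 * (cop_w g P2 * T P1 P2)))"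
    unfolding cop_def sum_distrib_right sum_distrib_left by (simp add: mult_ac)
  also have "\<dots> = (\<Sum>P1\<in>CP x. \<Sum>P2\<in>CP y. \<Sum>f\<in>supp x. \<Sum>g\<in>supp y. x f * y g * (cop_w f P1 * (cop_w g P2 * T P1 P2)))"
    by (rule sum.cong[OF refl], rule sum.cong[OF refl], rule sum.swap)
  also have "\<dots> = (\<Sum>f\<in>supp x. \<Sum>g\<in>supp y. \<Sum>P2\<in>CP y. \<Sum>P1\<in>CP x. x f * y g * (cop_w f P1 * (cop_w g P2 * T P1 P2)))"
    by (rule swap4)
  also have "\<dots> = (\<Sum>f\<in>supp x. \<Sum>g\<in>supp y. x f * y g * RHS f g)"
  proof (intro sum.cong refl)
    fix f g assume f: "f \<in> supp x" and g: "g \<in> supp y"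
    have "(\<Sum>P2\<in>CP y. \<Sum>P1\<in>CP x. cop_w f P1 * (cop_w g P2 * T P1 P2))
        = (\<Sum>P2\<in>CP y. cop_w g P2 * (\<Sum>P1\<in>CP x. cop_w f P1 * T P1 P2))"
      by (simp add: sum_distrib_left mult_ac)
    also have "\<dots> = (\<Sum>P2\<in>CP y. cop_w g P2 * (\<Sum>i\<in>{0..wmax f}. T (phi f i) P2))"
      by (simp add: copw_sum[OF fCx CP_phi[OF f]])
    also have "\<dots> = (\<Sum>j\<in>{0..wmax g}. \<Sum>i\<in>{0..wmax f}. T (phi f i) (phi g j))"
      by (rule copw_sum[OF fCy CP_phi[OF g]])
    also have "\<dots> = RHS f g" unfolding RHS_def by (rule sum.swap)
    finally show "(\<Sum>P2\<in>CP y. \<Sum>P1\<in>CP x. x f * y g * (cop_w f P1 * (cop_w g P2 * T P1 P2))) = x f * y g * RHS f g"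
      by (simp add: sum_distrib_left[symmetric])
  qed
  finally show "cop (bil (OPW q) x y) p = compat_rhs q OPW x y p" using L by simp
qed

theorem mainTheorem8:
  fixes q :: "'k::field"
  shows
    \<comment> \<open>ST(q) is a q-tridendriform algebra\<close>
    "(\<forall>a b c :: nat list \<Rightarrow> 'k. inST a \<and> inST b \<and> inST c \<longrightarrow>
       prec_q q (prec_q q a b) c
         = prec_q q a (vadd (vadd (prec_q q b c) (succ_q q b c)) (smul q (dot_q q b c))) \<and>
       prec_q q (succ_q q a b) c = succ_q q a (prec_q q b c) \<and>
       succ_q q (vadd (vadd (prec_q q a b) (succ_q q a b)) (smul q (dot_q q a b))) c
         = succ_q q a (succ_q q b c) \<and>
       dot_q q (dot_q q a b) c = dot_q q a (dot_q q b c) \<and>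
       dot_q q (succ_q q a b) c = succ_q q a (dot_q q b c) \<and>
       dot_q q (prec_q q a b) c = dot_q q a (succ_q q b c) \<and>
       prec_q q (dot_q q a b) c = dot_q q a (prec_q q b c))
   \<and> \<comment> \<open>Delta(1) = 1 (x) 1\<close>
     (cop (delta [] :: nat list \<Rightarrow> 'k) = tens (delta []) (delta []))
   \<and> \<comment> \<open>counit conditions\<close>
     (\<forall>x :: nat list \<Rightarrow> 'k. inSTp x \<longrightarrow> eps_id (cop x) = x \<and> id_eps (cop x) = x)
   \<and> \<comment> \<open>compatibility of Delta with the three products\<close>
     (\<forall>x y :: nat list \<Rightarrow> 'k. inST x \<and> inST y \<longrightarrow>
        cop (succ_q q x y) = compat_rhs q succ_w x y \<and>
        cop (dot_q q x y) = compat_rhs q dot_w x y \<and>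
        cop (prec_q q x y) = compat_rhs q prec_w x y)"

  apply (intro conjI allI impI)
                 apply (elim conjE, rule tridend(1); assumption)
                apply (elim conjE, rule tridend(2); assumption)
               apply (elim conjE, rule tridend(3); assumption)
              apply (elim conjE, rule tridend(4); assumption)
             apply (elim conjE, rule tridend(5); assumption)
            apply (elim conjE, rule tridend(6); assumption)
           apply (elim conjE, rule tridend(7); assumption)
          apply (rule cop_unit)
         apply (erule counit(1))
        apply (erule counit(2))
      apply (simp only: succ_q_def, rule compat_main[OF _ _ goodC_all(1) isgb_all(1)], (elim conjE; assumption)+)
     apply (simp only: dot_q_def, rule compat_main[OF _ _ goodC_all(2) isgb_all(2)], (elim conjE; assumption)+)
    apply (simp only: prec_q_def, rule compat_main[OF _ _ goodC_all(3) isgb_all(3)], (elim conjE; assumption)+)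
  done


end
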